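(* There exist symmetric spaces $E$ and $F$ on $[0,1]$, with fundamental functions $\varphi$ and $\psi$ respectively (both in $G$), such that $E\subset F$, $\lim_{t\to 0+}\psi(t)/\varphi(t)=0$, and the identity inclusion operator $I:E\to F$ is not disjointly strictly singular.
   Context: All functions are Lebesgue measurable on $[0,1]$, $\mu$ is Lebesgue measure. A symmetric space (SS) on $[0,1]$ is a Banach space $E$ of measurable functions on $[0,1]$ such that: (1) if $y\in E$ and $|x(t)|\le |y(t)|$ then $x\in E$ and $\|x\|\le\|y\|$; (2) if $y\in E$ and $x,y$ are equimeasurable (i.e. $\mu\{|x|>\tau\}=\mu\{|y|>\tau\}$ for all $\tau>0$) then $x\in E$ and $\|x\|=\|y\|$. The fundamental function of $E$ is $f_E(t)=\|\chi_{(0,t)}\|_E$. $G$ denotes the class of all positive increasing concave functions on $(0,1]$. A bounded linear operator $T$ from a Banach lattice $X$ into a Banach space $Y$ is disjointly strictly singular (DSS) if there is no sequence of nonzero pairwise disjoint elements $x_n\in X$ such that the restriction of $T$ to their closed linear span $[x_n]$ is an isomorphism (onto its image). *)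

theory Defs
  imports "HOL-Analysis.Analysis"
begin

abbreviation I01 :: "real measure" where
  "I01 \<equiv> lebesgue_on {0..1}"

text \<open>A symmetric space on [0,1]: a set E of (real-valued) measurable functions,
  with a norm N (a seminorm on functions vanishing exactly on a.e.-null functions,
  so that E modulo a.e. equality is a normed space), which is complete (Banach),
  an ideal with monotone norm, and rearrangement invariant.\<close>
definition symmetric_space :: "(real \<Rightarrow> real) set \<Rightarrow> ((real \<Rightarrow> real) \<Rightarrow> real) \<Rightarrow> bool" where
  "symmetric_space E N \<longleftrightarrow>
     E \<subseteq> borel_measurable I01 \<and>
     (\<lambda>t. 0) \<in> E \<and>
     (\<forall>x\<in>E. \<forall>y\<in>E. (\<lambda>t. x t + y t) \<in> E) \<and>
     (\<forall>x\<in>E. \<forall>c::real. (\<lambda>t. c * x t) \<in> E) \<and>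
     (\<forall>x\<in>E. N x \<ge> 0) \<and>
     (\<forall>x\<in>E. N x = 0 \<longleftrightarrow> (AE t in I01. x t = 0)) \<and>
     (\<forall>x\<in>E. \<forall>y\<in>E. N (\<lambda>t. x t + y t) \<le> N x + N y) \<and>
     (\<forall>x\<in>E. \<forall>c::real. N (\<lambda>t. c * x t) = \<bar>c\<bar> * N x) \<and>
     (\<forall>x::nat \<Rightarrow> real \<Rightarrow> real. (\<forall>n. x n \<in> E) \<longrightarrow>
        (\<forall>e>0. \<exists>M. \<forall>m\<ge>M. \<forall>n\<ge>M. N (\<lambda>t. x m t - x n t) < e) \<longrightarrow>
        (\<exists>y\<in>E. (\<lambda>n. N (\<lambda>t. x n t - y t)) \<longlonglongrightarrow> 0)) \<and>
     (\<forall>x y. y \<in> E \<longrightarrow> x \<in> borel_measurable I01 \<longrightarrow>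
        (AE t in I01. \<bar>x t\<bar> \<le> \<bar>y t\<bar>) \<longrightarrow> x \<in> E \<and> N x \<le> N y) \<and>
     (\<forall>x y. y \<in> E \<longrightarrow> x \<in> borel_measurable I01 \<longrightarrow>
        (\<forall>\<tau>>0. emeasure I01 {t\<in>{0..1}. \<bar>x t\<bar> > \<tau>} = emeasure I01 {t\<in>{0..1}. \<bar>y t\<bar> > \<tau>})
        \<longrightarrow> x \<in> E \<and> N x = N y)"

definition fund_fun :: "((real \<Rightarrow> real) \<Rightarrow> real) \<Rightarrow> real \<Rightarrow> real" where
  "fund_fun N t = N (indicator {0<..<t})"

definition in_G :: "(real \<Rightarrow> real) \<Rightarrow> bool" where
  "in_G \<phi> \<longleftrightarrow> (\<forall>t\<in>{0<..1}. \<phi> t > 0) \<and> mono_on {0<..1} \<phi> \<and> concave_on {0<..1} \<phi>"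

definition lin_span :: "(nat \<Rightarrow> real \<Rightarrow> real) \<Rightarrow> (real \<Rightarrow> real) set" where
  "lin_span x = {y. \<exists>n (c::nat \<Rightarrow> real). y = (\<lambda>t. \<Sum>i<n. c i * x i t)}"

definition closed_lin_span :: "(real \<Rightarrow> real) set \<Rightarrow> ((real \<Rightarrow> real) \<Rightarrow> real) \<Rightarrow>
    (nat \<Rightarrow> real \<Rightarrow> real) \<Rightarrow> (real \<Rightarrow> real) set" where
  "closed_lin_span X NX x =
     {z \<in> X. \<forall>e>0. \<exists>y\<in>lin_span x. NX (\<lambda>t. z t - y t) < e}"

definition DSS :: "(real \<Rightarrow> real) set \<Rightarrow> ((real \<Rightarrow> real) \<Rightarrow> real) \<Rightarrow>
    ((real \<Rightarrow> real) \<Rightarrow> real) \<Rightarrow> ((real \<Rightarrow> real) \<Rightarrow> (real \<Rightarrow> real)) \<Rightarrow> bool" where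
  "DSS X NX NY T \<longleftrightarrow>
     \<not> (\<exists>x::nat \<Rightarrow> real \<Rightarrow> real.
          (\<forall>n. x n \<in> X \<and> NX (x n) \<noteq> 0) \<and>
          (\<forall>i j. i \<noteq> j \<longrightarrow> (AE t in I01. x i t * x j t = 0)) \<and>
          (\<exists>c>0. \<exists>C>0. \<forall>z\<in>closed_lin_span X NX x.
               c * NX z \<le> NY (T z) \<and> NY (T z) \<le> C * NX z))"

end

theory Submission
  imports Defs "HOL-Probability.Distribution_Functions" "HOL-Real_Asymp.Real_Asymp"
begin

lemma space_I01[simp]: "space I01 = {0..1}" by simp

lemma emeasure_I01_space: "emeasure I01 {0..1} = 1"
  by (simp add: emeasure_restrict_space)

lemma prob_space_I01: "prob_space I01"
  by (rule prob_spaceI) (simp add: emeasure_restrict_space)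

lemma equimeas_distr:
  fixes x y :: "real \<Rightarrow> real"
  assumes x[measurable]: "x \<in> borel_measurable I01" and y[measurable]: "y \<in> borel_measurable I01"
    and eq: "\<forall>\<tau>>0. emeasure I01 {t\<in>{0..1}. \<bar>x t\<bar> > \<tau>} = emeasure I01 {t\<in>{0..1}. \<bar>y t\<bar> > \<tau>}"
  shows "distr I01 borel (\<lambda>t. \<bar>x t\<bar>) = distr I01 borel (\<lambda>t. \<bar>y t\<bar>)"
proof -
  interpret P: prob_space I01 by (rule prob_space_I01)
  have rd: "real_distribution (distr I01 borel (\<lambda>t. \<bar>z t\<bar>))" if [measurable]: "z \<in> borel_measurable I01" for z :: "real \<Rightarrow> real"
    unfolding real_distribution_def real_distribution_axioms_def
    by (auto intro!: P.prob_space_distr)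
  have cdfeq: "cdf (distr I01 borel (\<lambda>t. \<bar>z t\<bar>)) a = 1 - measure I01 {t\<in>{0..1}. \<bar>z t\<bar> > a}"
    if [measurable]: "z \<in> borel_measurable I01" for z :: "real \<Rightarrow> real" and a
  proof -
    have "cdf (distr I01 borel (\<lambda>t. \<bar>z t\<bar>)) a = measure I01 {t\<in>{0..1}. \<bar>z t\<bar> \<le> a}"
      unfolding cdf_def by (subst measure_distr) (auto intro!: arg_cong[where f="measure I01"])
    also have "{t\<in>{0..1}. \<bar>z t\<bar> \<le> a} = space I01 - {t\<in>{0..1}. \<bar>z t\<bar> > a}" by auto
    also have "measure I01 \<dots> = measure I01 (space I01) - measure I01 {t\<in>{0..1}. \<bar>z t\<bar> > a}"
    proof -
      have "{t \<in> space I01. a < \<bar>z t\<bar>} \<in> sets I01" by measurable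
      then show ?thesis by (intro P.finite_measure_Diff) auto
    qed
    also have "measure I01 (space I01) = 1" using P.prob_space by simp
    finally show ?thesis .
  qed
  have pos: "cdf (distr I01 borel (\<lambda>t. \<bar>x t\<bar>)) a = cdf (distr I01 borel (\<lambda>t. \<bar>y t\<bar>)) a" if "a > 0" for a
    using eq that by (simp add: cdfeq measure_def)
  have neg: "cdf (distr I01 borel (\<lambda>t. \<bar>z t\<bar>)) a = 0" if "a < 0" "z \<in> borel_measurable I01" for a and z :: "real \<Rightarrow> real"
  proof -
    have "{t\<in>{0..1}. \<bar>z t\<bar> > a} = space I01" using that by auto
    then show ?thesis using cdfeq[OF that(2)] P.prob_space by simp
  qed
  have zero: "cdf (distr I01 borel (\<lambda>t. \<bar>x t\<bar>)) 0 = cdf (distr I01 borel (\<lambda>t. \<bar>y t\<bar>)) 0"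
  proof -
    have r1: "(cdf (distr I01 borel (\<lambda>t. \<bar>x t\<bar>)) \<longlongrightarrow> cdf (distr I01 borel (\<lambda>t. \<bar>x t\<bar>)) 0) (at_right 0)"
      using finite_borel_measure.cdf_is_right_cont[OF real_distribution.finite_borel_measure_M[OF rd[OF x]]] by (simp add: continuous_within)
    have r2: "(cdf (distr I01 borel (\<lambda>t. \<bar>y t\<bar>)) \<longlongrightarrow> cdf (distr I01 borel (\<lambda>t. \<bar>y t\<bar>)) 0) (at_right 0)"
      using finite_borel_measure.cdf_is_right_cont[OF real_distribution.finite_borel_measure_M[OF rd[OF y]]] by (simp add: continuous_within)
    have "(cdf (distr I01 borel (\<lambda>t. \<bar>x t\<bar>)) \<longlongrightarrow> cdf (distr I01 borel (\<lambda>t. \<bar>y t\<bar>)) 0) (at_right 0)"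
      by (rule Lim_transform_eventually[OF r2]) (auto simp: eventually_at_right_field pos intro!: exI[of _ 1])
    then show ?thesis using r1 tendsto_unique by (metis trivial_limit_at_right_real)
  qed
  have "cdf (distr I01 borel (\<lambda>t. \<bar>x t\<bar>)) = cdf (distr I01 borel (\<lambda>t. \<bar>y t\<bar>))"
  proof
    fix a :: real
    show "cdf (distr I01 borel (\<lambda>t. \<bar>x t\<bar>)) a = cdf (distr I01 borel (\<lambda>t. \<bar>y t\<bar>)) a"
      using pos[of a] neg[of a x] neg[of a y] zero by (cases "a > 0"; cases "a < 0") auto
  qed
  then show ?thesis by (intro cdf_unique rd x y)
qed

lemma equimeas_nn_integral:
  fixes x y :: "real \<Rightarrow> real"
  assumes x[measurable]: "x \<in> borel_measurable I01" and y[measurable]: "y \<in> borel_measurable I01"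
    and eq: "\<forall>\<tau>>0. emeasure I01 {t\<in>{0..1}. \<bar>x t\<bar> > \<tau>} = emeasure I01 {t\<in>{0..1}. \<bar>y t\<bar> > \<tau>}"
    and f[measurable]: "f \<in> borel_measurable borel"
  shows "(\<integral>\<^sup>+t. f \<bar>x t\<bar> \<partial>I01) = (\<integral>\<^sup>+t. f \<bar>y t\<bar> \<partial>I01)"
proof -
  have "(\<integral>\<^sup>+t. f \<bar>x t\<bar> \<partial>I01) = (\<integral>\<^sup>+u. f u \<partial>distr I01 borel (\<lambda>t. \<bar>x t\<bar>))"
    by (subst nn_integral_distr) auto
  also have "\<dots> = (\<integral>\<^sup>+u. f u \<partial>distr I01 borel (\<lambda>t. \<bar>y t\<bar>))"
    using equimeas_distr[OF x y eq] by simp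
  also have "\<dots> = (\<integral>\<^sup>+t. f \<bar>y t\<bar> \<partial>I01)"
    by (subst nn_integral_distr) auto
  finally show ?thesis .
qed


lemma INF_ennreal_add_const_gen:
  fixes f :: "'a \<Rightarrow> ennreal"
  assumes "A \<noteq> {}"
  shows "(INF i\<in>A. f i + c) = (INF i\<in>A. f i) + c"
  using continuous_at_Inf_mono[of "\<lambda>x. x + c" "f`A"]
  using continuous_add[of "at_right (Inf (f`A))", of "\<lambda>x. x" "\<lambda>x. c"] assms
  by (auto simp: mono_def image_comp)

lemma ennreal_le_INF_add:
  fixes f g :: "'a \<Rightarrow> ennreal"
  assumes "A \<noteq> {}" "B \<noteq> {}" and le: "\<And>a b. a \<in> A \<Longrightarrow> b \<in> B \<Longrightarrow> c \<le> f a + g b"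
  shows "c \<le> (INF a\<in>A. f a) + (INF b\<in>B. g b)"
proof -
  have "c \<le> (INF a\<in>A. f a) + g b" if "b \<in> B" for b
  proof -
    have "c \<le> (INF a\<in>A. f a + g b)" using le that by (auto intro: INF_greatest)
    then show ?thesis using INF_ennreal_add_const_gen[OF assms(1)] by simp
  qed
  then have "c \<le> (INF b\<in>B. (INF a\<in>A. f a) + g b)" by (auto intro: INF_greatest)
  also have "\<dots> = (INF a\<in>A. f a) + (INF b\<in>B. g b)"
    using INF_ennreal_add_const_gen[OF assms(2), of g "INF a\<in>A. f a"] by (simp add: add.commute)
  finally show ?thesis .
qed

definition Pe :: "real \<Rightarrow> (real \<Rightarrow> real) \<Rightarrow> ennreal" where
  "Pe s x = (\<integral>\<^sup>+t. ennreal (\<bar>x t\<bar> - s) \<partial>I01)"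

definition Qe :: "real \<Rightarrow> (real \<Rightarrow> real) \<Rightarrow> ennreal" where
  "Qe r x = (INF s\<in>{0..}. ennreal (r * s) + Pe s x)"

lemma Qe_le: "s \<ge> 0 \<Longrightarrow> Qe r x \<le> ennreal (r * s) + Pe s x"
  unfolding Qe_def by (rule INF_lower) auto

lemma Qe_le_L1: "Qe r x \<le> (\<integral>\<^sup>+t. ennreal \<bar>x t\<bar> \<partial>I01)"
  using Qe_le[of 0 r x] by (simp add: Pe_def)

lemma Pe_mono: "AE t in I01. \<bar>x t\<bar> \<le> \<bar>y t\<bar> \<Longrightarrow> Pe s x \<le> Pe s y"
  unfolding Pe_def by (rule nn_integral_mono_AE) (auto elim!: eventually_mono intro!: ennreal_leI)

lemma Qe_mono: "AE t in I01. \<bar>x t\<bar> \<le> \<bar>y t\<bar> \<Longrightarrow> Qe r x \<le> Qe r y"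
  unfolding Qe_def by (intro INF_mono) (auto intro!: bexI add_mono Pe_mono)

lemma Pe_add:
  fixes x y :: "real \<Rightarrow> real"
  assumes [measurable]: "x \<in> borel_measurable I01" "y \<in> borel_measurable I01"
  shows "Pe (s1 + s2) (\<lambda>t. x t + y t) \<le> Pe s1 x + Pe s2 y"
proof -
  have "Pe (s1 + s2) (\<lambda>t. x t + y t) \<le> (\<integral>\<^sup>+t. ennreal (\<bar>x t\<bar> - s1) + ennreal (\<bar>y t\<bar> - s2) \<partial>I01)"
    unfolding Pe_def
  proof (rule nn_integral_mono)
    fix t
    have "ennreal (\<bar>x t + y t\<bar> - (s1 + s2)) \<le> ennreal (max (\<bar>x t\<bar> - s1) 0 + max (\<bar>y t\<bar> - s2) 0)"
      by (intro ennreal_leI) auto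
    also have "\<dots> = ennreal (max (\<bar>x t\<bar> - s1) 0) + ennreal (max (\<bar>y t\<bar> - s2) 0)"
      by (rule ennreal_plus) auto
    also have "ennreal (max (\<bar>x t\<bar> - s1) 0) = ennreal (\<bar>x t\<bar> - s1)"
      by (cases "\<bar>x t\<bar> - s1 \<ge> 0") (auto simp: max_def ennreal_neg)
    also have "ennreal (max (\<bar>y t\<bar> - s2) 0) = ennreal (\<bar>y t\<bar> - s2)"
      by (cases "\<bar>y t\<bar> - s2 \<ge> 0") (auto simp: max_def ennreal_neg)
    finally show "ennreal (\<bar>x t + y t\<bar> - (s1 + s2)) \<le> ennreal (\<bar>x t\<bar> - s1) + ennreal (\<bar>y t\<bar> - s2)" .
  qed
  also have "\<dots> = Pe s1 x + Pe s2 y"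
    unfolding Pe_def by (rule nn_integral_add) auto
  finally show ?thesis .
qed

lemma Qe_add:
  fixes x y :: "real \<Rightarrow> real"
  assumes [measurable]: "x \<in> borel_measurable I01" "y \<in> borel_measurable I01" and r: "r \<ge> 0"
  shows "Qe r (\<lambda>t. x t + y t) \<le> Qe r x + Qe r y"
  unfolding Qe_def[of r x] Qe_def[of r y]
proof (rule ennreal_le_INF_add)
  fix s1 s2 :: real assume "s1 \<in> {0..}" "s2 \<in> {0..}"
  then have "Qe r (\<lambda>t. x t + y t) \<le> ennreal (r * (s1 + s2)) + Pe (s1 + s2) (\<lambda>t. x t + y t)"
    by (intro Qe_le) auto
  also have "\<dots> \<le> ennreal (r * s1) + ennreal (r * s2) + (Pe s1 x + Pe s2 y)"
    using \<open>s1 \<in> {0..}\<close> \<open>s2 \<in> {0..}\<close> r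
    by (intro add_mono Pe_add) (auto simp: distrib_left ennreal_plus[symmetric] simp del: ennreal_plus)
  finally show "Qe r (\<lambda>t. x t + y t) \<le> ennreal (r * s1) + Pe s1 x + (ennreal (r * s2) + Pe s2 y)"
    by (simp add: ac_simps)
qed auto

lemma Pe_cmult:
  fixes x :: "real \<Rightarrow> real"
  assumes [measurable]: "x \<in> borel_measurable I01" and c: "c \<ge> 0"
  shows "Pe (c * s) (\<lambda>t. c * x t) = ennreal c * Pe s x"
proof -
  have "Pe (c * s) (\<lambda>t. c * x t) = (\<integral>\<^sup>+t. ennreal c * ennreal (\<bar>x t\<bar> - s) \<partial>I01)"
    unfolding Pe_def using c
    by (intro nn_integral_cong) (auto simp: abs_mult right_diff_distrib ennreal_mult'[symmetric])
  also have "\<dots> = ennreal c * Pe s x" unfolding Pe_def by (rule nn_integral_cmult) auto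
  finally show ?thesis .
qed

lemma Qe_cmult_ge:
  fixes x :: "real \<Rightarrow> real"
  assumes [measurable]: "x \<in> borel_measurable I01" and c: "c \<noteq> 0"
  shows "ennreal \<bar>c\<bar> * Qe r x \<le> Qe r (\<lambda>t. c * x t)"
  unfolding Qe_def[of r "\<lambda>t. c * x t"]
proof (rule INF_greatest)
  fix s :: real assume s: "s \<in> {0..}"
  define s' where "s' = s / \<bar>c\<bar>"
  have ss: "s = \<bar>c\<bar> * s'" "s' \<ge> 0" using c s by (auto simp: s'_def)
  have "Pe s (\<lambda>t. c * x t) = Pe (\<bar>c\<bar> * s') (\<lambda>t. \<bar>c\<bar> * x t)"
    unfolding Pe_def ss by (simp add: abs_mult)
  also have "\<dots> = ennreal \<bar>c\<bar> * Pe s' x" by (rule Pe_cmult) auto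
  finally have "ennreal (r * s) + Pe s (\<lambda>t. c * x t) = ennreal \<bar>c\<bar> * (ennreal (r * s') + Pe s' x)"
    by (simp add: ss distrib_left ennreal_mult'[symmetric] ac_simps)
  also have "\<dots> \<ge> ennreal \<bar>c\<bar> * Qe r x"
    by (intro mult_left_mono Qe_le ss) auto
  finally show "ennreal \<bar>c\<bar> * Qe r x \<le> ennreal (r * s) + Pe s (\<lambda>t. c * x t)" .
qed

lemma Qe_zero_fun: "Qe r (\<lambda>t. 0) = 0"
  using Qe_le_L1[of r "\<lambda>t. 0"] by simp

lemma Qe_cmult:
  fixes x :: "real \<Rightarrow> real"
  assumes [measurable]: "x \<in> borel_measurable I01"
  shows "Qe r (\<lambda>t. c * x t) = ennreal \<bar>c\<bar> * Qe r x"
proof (cases "c = 0")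
  case True then show ?thesis by (simp add: Qe_zero_fun)
next
  case False
  have "ennreal \<bar>inverse c\<bar> * Qe r (\<lambda>t. c * x t) \<le> Qe r (\<lambda>t. inverse c * (c * x t))"
    using False by (intro Qe_cmult_ge) auto
  also have "(\<lambda>t. inverse c * (c * x t)) = x" using False by auto
  finally have "ennreal \<bar>c\<bar> * (ennreal \<bar>inverse c\<bar> * Qe r (\<lambda>t. c * x t)) \<le> ennreal \<bar>c\<bar> * Qe r x"
    by (rule mult_left_mono) auto
  also have "ennreal \<bar>c\<bar> * (ennreal \<bar>inverse c\<bar> * Qe r (\<lambda>t. c * x t)) = Qe r (\<lambda>t. c * x t)"
    using False by (simp add: mult.assoc[symmetric] ennreal_mult[symmetric] abs_mult[symmetric] del: ennreal_mult' ennreal_mult'')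
  finally show ?thesis using Qe_cmult_ge[OF assms False] by (rule antisym)
qed

lemma Qe_equimeas:
  fixes x y :: "real \<Rightarrow> real"
  assumes x[measurable]: "x \<in> borel_measurable I01" and y[measurable]: "y \<in> borel_measurable I01"
    and eq: "\<forall>\<tau>>0. emeasure I01 {t\<in>{0..1}. \<bar>x t\<bar> > \<tau>} = emeasure I01 {t\<in>{0..1}. \<bar>y t\<bar> > \<tau>}"
  shows "Qe r x = Qe r y"
proof -
  have "Pe s x = Pe s y" for s
    unfolding Pe_def using equimeas_nn_integral[OF x y eq, of "\<lambda>u. ennreal (u - s)"] by simp
  then show ?thesis unfolding Qe_def by simp
qed


lemma emeasure_I01_Ioo: assumes "0 \<le> s" "s \<le> 1" shows "emeasure I01 {0<..<s} = ennreal s"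
proof -
  have "emeasure I01 {0<..<s} = emeasure lebesgue {0<..<s}"
    using assms by (subst emeasure_restrict_space) auto
  also have "\<dots> = ennreal s" using assms by simp
  finally show ?thesis .
qed

lemma sets_I01_borel: "A \<in> sets borel \<Longrightarrow> A \<inter> {0..1} \<in> sets I01"
  unfolding sets_restrict_space by (auto intro!: image_eqI[where x=A])

lemma ind_meas[measurable]: "(indicator {0<..<s} :: real \<Rightarrow> real) \<in> borel_measurable I01"
  unfolding borel_measurable_indicator_iff using sets_I01_borel[of "{0<..<s}"] by simp

definition phi :: "real \<Rightarrow> real" where "phi t = sqrt (t * (2 - ln t))"

lemma h_pos: "0 < (t::real) \<Longrightarrow> t \<le> 1 \<Longrightarrow> 0 < t * (2 - ln t)"
proof -
  assume a: "0 < t" "t \<le> 1"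
  then have "ln t \<le> 0" by simp
  then have "0 < 2 - ln t" by linarith
  then show ?thesis using a by simp
qed

lemma phi_pos: "0 < (t::real) \<Longrightarrow> t \<le> 1 \<Longrightarrow> 0 < phi t"
  unfolding phi_def using h_pos by auto

lemma h_mono: assumes "0 < (s::real)" "s \<le> t" "t \<le> 1" shows "s * (2 - ln s) \<le> t * (2 - ln t)"
proof -
  have l1: "ln t - ln s \<le> (t - s) / s"
  proof -
    have "ln (t / s) \<le> t / s - 1" using assms by (intro ln_le_minus_one) auto
    then show ?thesis using assms by (simp add: ln_div diff_divide_distrib)
  qed
  have l2: "s * (ln t - ln s) \<le> t - s" using l1 assms by (simp add: field_simps)
  have l3: "ln t \<le> 0" using assms by simp
  have "(t - s) * ln t \<le> 0" using l3 assms by (simp add: mult_nonneg_nonpos)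
  then show ?thesis using l2 assms by (simp add: algebra_simps)
qed

lemma phi_mono: "0 < (s::real) \<Longrightarrow> s \<le> t \<Longrightarrow> t \<le> 1 \<Longrightarrow> phi s \<le> phi t"
  unfolding phi_def using h_mono by auto

lemma phi_div_anti: assumes "0 < s" "s \<le> t" "t \<le> 1" shows "phi t / t \<le> phi s / s"
proof -
  have e: "phi u / u = sqrt ((2 - ln u) / u)" if "0 < u" for u
  proof -
    have "sqrt ((2 - ln u) / u) = sqrt (u * (2 - ln u) / u\<^sup>2)" using that by (simp add: power2_eq_square)
    also have "\<dots> = sqrt (u * (2 - ln u)) / sqrt (u\<^sup>2)" by (rule real_sqrt_divide)
    also have "\<dots> = phi u / u" using that by (simp add: phi_def)
    finally show ?thesis by simp
  qed
  have "(2 - ln t) / t \<le> (2 - ln s) / s"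
  proof (rule frac_le)
    have "ln s \<le> 0" using assms by simp
    then show "0 \<le> 2 - ln s" by linarith
    show "2 - ln t \<le> 2 - ln s" using assms by simp
  qed (use assms in auto)
  then show ?thesis using assms e by simp
qed

definition NMe :: "(real \<Rightarrow> real) \<Rightarrow> ennreal" where
  "NMe x = (SUP t\<in>{0<..1}. ennreal (phi t / t) * Qe t x)"

lemma NMe_add:
  fixes x y :: "real \<Rightarrow> real"
  assumes [measurable]: "x \<in> borel_measurable I01" "y \<in> borel_measurable I01"
  shows "NMe (\<lambda>t. x t + y t) \<le> NMe x + NMe y"
  unfolding NMe_def
proof (rule SUP_least)
  fix t :: real assume t: "t \<in> {0<..1}"
  have "ennreal (phi t / t) * Qe t (\<lambda>t. x t + y t) \<le> ennreal (phi t / t) * (Qe t x + Qe t y)"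
    using t by (intro mult_left_mono Qe_add) auto
  also have "\<dots> = ennreal (phi t / t) * Qe t x + ennreal (phi t / t) * Qe t y"
    by (simp add: distrib_left)
  also have "\<dots> \<le> (SUP t\<in>{0<..1}. ennreal (phi t / t) * Qe t x) + (SUP t\<in>{0<..1}. ennreal (phi t / t) * Qe t y)"
    using t by (intro add_mono SUP_upper)
  finally show "ennreal (phi t / t) * Qe t (\<lambda>t. x t + y t) \<le> \<dots>" .
qed

lemma NMe_cmult:
  fixes x :: "real \<Rightarrow> real"
  assumes [measurable]: "x \<in> borel_measurable I01"
  shows "NMe (\<lambda>t. c * x t) = ennreal \<bar>c\<bar> * NMe x"
  unfolding NMe_def SUP_mult_left_ennreal by (simp add: Qe_cmult ac_simps)

lemma NMe_mono: "AE t in I01. \<bar>x t\<bar> \<le> \<bar>y t\<bar> \<Longrightarrow> NMe x \<le> NMe y"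
  unfolding NMe_def by (intro SUP_mono) (auto intro!: bexI mult_left_mono Qe_mono)

lemma NMe_equimeas:
  fixes x y :: "real \<Rightarrow> real"
  assumes x[measurable]: "x \<in> borel_measurable I01" and y[measurable]: "y \<in> borel_measurable I01"
    and eq: "\<forall>\<tau>>0. emeasure I01 {t\<in>{0..1}. \<bar>x t\<bar> > \<tau>} = emeasure I01 {t\<in>{0..1}. \<bar>y t\<bar> > \<tau>}"
  shows "NMe x = NMe y"
  unfolding NMe_def using Qe_equimeas[OF x y eq] by simp

lemma NMe_AE0: "AE t in I01. x t = 0 \<Longrightarrow> NMe x = 0"
proof -
  assume "AE t in I01. x t = 0"
  then have "NMe x \<le> NMe (\<lambda>t. 0)" by (intro NMe_mono) (auto elim: eventually_mono)
  also have "NMe (\<lambda>t. 0) = 0" unfolding NMe_def by (simp add: Qe_zero_fun)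
  finally show ?thesis by simp
qed

lemma Pe_ind: assumes "0 \<le> r" "0 \<le> s" "s \<le> 1"
  shows "Pe r (indicator {0<..<s}) = ennreal (1 - r) * ennreal s"
proof -
  have "Pe r (indicator {0<..<s}) = (\<integral>\<^sup>+t. ennreal (1 - r) * indicator {0<..<s} t \<partial>I01)"
    unfolding Pe_def using assms by (intro nn_integral_cong) (auto simp: indicator_def ennreal_neg)
  also have "\<dots> = ennreal (1 - r) * emeasure I01 {0<..<s}"
    using assms by (intro nn_integral_cmult_indicator) (auto intro: sets_restrict_space_iff[THEN iffD2])
  finally show ?thesis using emeasure_I01_Ioo assms by simp
qed

lemma Qe_ind: assumes "0 < r" "0 < s" "s \<le> 1"
  shows "Qe r (indicator {0<..<s}) = ennreal (min r s)"
proof (rule antisym)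
  have "Qe r (indicator {0<..<s}) \<le> ennreal (r * 0) + Pe 0 (indicator {0<..<s})" by (rule Qe_le) simp
  also have "\<dots> = ennreal s" using assms by (simp add: Pe_ind)
  finally have 1: "Qe r (indicator {0<..<s}) \<le> ennreal s" .
  have "Qe r (indicator {0<..<s}) \<le> ennreal (r * 1) + Pe 1 (indicator {0<..<s})" by (rule Qe_le) simp
  also have "\<dots> = ennreal r" using assms by (simp add: Pe_ind)
  finally have 2: "Qe r (indicator {0<..<s}) \<le> ennreal r" .
  show "Qe r (indicator {0<..<s}) \<le> ennreal (min r s)" using 1 2 by (cases "r \<le> s") (auto simp: min_def)
next
  show "ennreal (min r s) \<le> Qe r (indicator {0<..<s})"
    unfolding Qe_def
  proof (rule INF_greatest)
    fix u :: real assume u: "u \<in> {0..}"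
    show "ennreal (min r s) \<le> ennreal (r * u) + Pe u (indicator {0<..<s})"
    proof (cases "u \<le> 1")
      case True
      have "ennreal (r * u) + Pe u (indicator {0<..<s}) = ennreal (r * u + (1 - u) * s)"
        using u True assms by (simp add: Pe_ind ennreal_mult[symmetric])
      also have "ennreal (min r s) \<le> \<dots>"
      proof (intro ennreal_leI)
        have "min r s = u * min r s + (1 - u) * min r s" by (simp add: algebra_simps)
        also have "\<dots> \<le> r * u + (1 - u) * s"
        proof (intro add_mono)
          show "u * min r s \<le> r * u" using u by (subst mult.commute) (intro mult_left_mono, auto)
          show "(1 - u) * min r s \<le> (1 - u) * s" using True by (intro mult_left_mono) auto
        qed
        finally show "min r s \<le> r * u + (1 - u) * s" .
      qed
      finally show ?thesis .
    next
      case False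
      have "ennreal (min r s) \<le> ennreal (r * u)"
        using False assms by (intro ennreal_leI) (auto simp: min_def intro: order.trans[of _ r])
      then show ?thesis by (rule order.trans) simp
    qed
  qed
qed

lemma NMe_ind: assumes "0 < s" "s \<le> 1" shows "NMe (indicator {0<..<s}) = ennreal (phi s)"
proof (rule antisym)
  show "NMe (indicator {0<..<s}) \<le> ennreal (phi s)"
    unfolding NMe_def
  proof (rule SUP_least)
    fix t :: real assume t: "t \<in> {0<..1}"
    have "ennreal (phi t / t) * Qe t (indicator {0<..<s}) = ennreal (phi t / t * min t s)"
      using t assms phi_pos[of t] by (simp add: Qe_ind ennreal_mult[symmetric] del: ennreal_mult' ennreal_mult'')
    also have "\<dots> \<le> ennreal (phi s)"
    proof (intro ennreal_leI)
      show "phi t / t * min t s \<le> phi s"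
      proof (cases "t \<le> s")
        case True then show ?thesis using t phi_mono[of t s] assms by (simp add: min_def)
      next
        case False
        then have "phi t / t * s \<le> phi s / s * s"
          using t assms phi_div_anti[of s t] by (intro mult_right_mono) auto
        then show ?thesis using False assms by (simp add: min_def)
      qed
    qed
    finally show "ennreal (phi t / t) * Qe t (indicator {0<..<s}) \<le> ennreal (phi s)" .
  qed
next
  have "ennreal (phi s / s) * Qe s (indicator {0<..<s}) \<le> NMe (indicator {0<..<s})"
    unfolding NMe_def using assms by (intro SUP_upper) auto
  moreover have "ennreal (phi s / s) * Qe s (indicator {0<..<s}) = ennreal (phi s)"
    using assms phi_pos[of s] by (simp add: Qe_ind ennreal_mult[symmetric])
  ultimately show "ennreal (phi s) \<le> NMe (indicator {0<..<s})" by simp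
qed


definition L2e :: "(real \<Rightarrow> real) \<Rightarrow> ennreal" where
  "L2e x = (\<integral>\<^sup>+t. ennreal ((x t)\<^sup>2) \<partial>I01)"

definition nrmF :: "(real \<Rightarrow> real) \<Rightarrow> real" where
  "nrmF x = sqrt (enn2real (L2e x))"

definition EF :: "(real \<Rightarrow> real) set" where
  "EF = {x \<in> borel_measurable I01. L2e x < \<infinity>}"

lemma NF_nonneg: "nrmF x \<ge> 0" unfolding nrmF_def by simp

lemma L2e_mono: "AE t in I01. \<bar>x t\<bar> \<le> \<bar>y t\<bar> \<Longrightarrow> L2e x \<le> L2e y"
  unfolding L2e_def by (rule nn_integral_mono_AE) (auto elim!: eventually_mono intro!: ennreal_leI simp: abs_le_square_iff)

lemma L2e_cmult:
  fixes x :: "real \<Rightarrow> real"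
  assumes [measurable]: "x \<in> borel_measurable I01"
  shows "L2e (\<lambda>t. c * x t) = ennreal (c\<^sup>2) * L2e x"
  unfolding L2e_def by (subst nn_integral_cmult[symmetric]) (auto simp: power_mult_distrib ennreal_mult)

lemma L2e_zero_iff:
  fixes x :: "real \<Rightarrow> real"
  assumes [measurable]: "x \<in> borel_measurable I01"
  shows "L2e x = 0 \<longleftrightarrow> (AE t in I01. x t = 0)"
  unfolding L2e_def by (subst nn_integral_0_iff_AE) auto

lemma L2e_equimeas:
  fixes x y :: "real \<Rightarrow> real"
  assumes x[measurable]: "x \<in> borel_measurable I01" and y[measurable]: "y \<in> borel_measurable I01"
    and eq: "\<forall>\<tau>>0. emeasure I01 {t\<in>{0..1}. \<bar>x t\<bar> > \<tau>} = emeasure I01 {t\<in>{0..1}. \<bar>y t\<bar> > \<tau>}"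
  shows "L2e x = L2e y"
  unfolding L2e_def using equimeas_nn_integral[OF x y eq, of "\<lambda>u. ennreal (u\<^sup>2)"] by simp

lemma L2e_eq: "x \<in> EF \<Longrightarrow> L2e x = ennreal ((nrmF x)\<^sup>2)"
  unfolding EF_def nrmF_def by (auto simp: ennreal_enn2real_if)

lemma ennreal_sum3: "0 \<le> A \<Longrightarrow> 0 \<le> B \<Longrightarrow> 0 \<le> C \<Longrightarrow> ennreal (A + B + 2 * C) = ennreal A + ennreal B + 2 * ennreal C"
  by (simp add: ennreal_mult')

lemma sq_sum_le: "((x::real) + y)\<^sup>2 \<le> x\<^sup>2 + y\<^sup>2 + 2 * (\<bar>x\<bar> * \<bar>y\<bar>)"
proof -
  have "x * y \<le> \<bar>x\<bar> * \<bar>y\<bar>" by (metis abs_ge_self abs_mult)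
  then show ?thesis by (simp add: power2_sum)
qed

lemma ennreal_sq_le:
  fixes A :: ennreal
  assumes "A\<^sup>2 \<le> ennreal (c\<^sup>2)" "c \<ge> 0"
  shows "A \<le> ennreal c"
proof (cases A)
  case (real r)
  then have "ennreal (r\<^sup>2) \<le> ennreal (c\<^sup>2)" using assms by (simp add: ennreal_power)
  then have "r\<^sup>2 \<le> c\<^sup>2" by (auto simp add: ennreal_le_iff2)
  then have "r \<le> c" using assms real by (simp add: abs_le_square_iff[symmetric])
  then show ?thesis using real by simp
next
  case top
  then show ?thesis using assms by (simp add: top_power_ennreal top_unique)
qed

lemma L1_le_NF:
  fixes x :: "real \<Rightarrow> real"
  assumes "x \<in> EF"
  shows "(\<integral>\<^sup>+t. ennreal \<bar>x t\<bar> \<partial>I01) \<le> ennreal (nrmF x)"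
proof -
  have [measurable]: "x \<in> borel_measurable I01" using assms by (simp add: EF_def)
  have "(\<integral>\<^sup>+t. ennreal \<bar>x t\<bar> * 1 \<partial>I01)\<^sup>2 \<le> (\<integral>\<^sup>+t. (ennreal \<bar>x t\<bar>)\<^sup>2 \<partial>I01) * (\<integral>\<^sup>+t. 1 ^ 2 \<partial>I01)"
    by (rule Cauchy_Schwarz_nn_integral) auto
  also have "(\<integral>\<^sup>+t. (ennreal \<bar>x t\<bar>)\<^sup>2 \<partial>I01) = L2e x"
    unfolding L2e_def by (intro nn_integral_cong) (simp add: ennreal_power)
  also have "(\<integral>\<^sup>+t. 1 ^ 2 \<partial>I01) = 1"
    using emeasure_I01_space by simp
  finally have "(\<integral>\<^sup>+t. ennreal \<bar>x t\<bar> * 1 \<partial>I01)\<^sup>2 \<le> ennreal ((nrmF x)\<^sup>2)"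
    using L2e_eq[OF assms] by simp
  then have "(\<integral>\<^sup>+t. ennreal \<bar>x t\<bar> * 1 \<partial>I01) \<le> ennreal (nrmF x)"
    by (rule ennreal_sq_le) (rule NF_nonneg)
  then show ?thesis by simp
qed

lemma EF_add:
  fixes x y :: "real \<Rightarrow> real"
  assumes "x \<in> EF" "y \<in> EF"
  shows "(\<lambda>t. x t + y t) \<in> EF \<and> nrmF (\<lambda>t. x t + y t) \<le> nrmF x + nrmF y"
proof -
  have [measurable]: "x \<in> borel_measurable I01" "y \<in> borel_measurable I01" using assms by (auto simp: EF_def)
  define a where "a = nrmF x"
  define b where "b = nrmF y"
  have ab: "a \<ge> 0" "b \<ge> 0" by (auto simp: a_def b_def NF_nonneg)
  have "(\<integral>\<^sup>+t. ennreal \<bar>x t\<bar> * ennreal \<bar>y t\<bar> \<partial>I01)\<^sup>2 \<le> (\<integral>\<^sup>+t. (ennreal \<bar>x t\<bar>)\<^sup>2 \<partial>I01) * (\<integral>\<^sup>+t. (ennreal \<bar>y t\<bar>)\<^sup>2 \<partial>I01)"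
    by (rule Cauchy_Schwarz_nn_integral) auto
  also have "(\<integral>\<^sup>+t. (ennreal \<bar>x t\<bar>)\<^sup>2 \<partial>I01) = L2e x"
    unfolding L2e_def by (intro nn_integral_cong) (simp add: ennreal_power)
  also have "(\<integral>\<^sup>+t. (ennreal \<bar>y t\<bar>)\<^sup>2 \<partial>I01) = L2e y"
    unfolding L2e_def by (intro nn_integral_cong) (simp add: ennreal_power)
  also have "L2e x * L2e y = ennreal ((a * b)\<^sup>2)"
  proof -
    have "L2e x * L2e y = ennreal (a\<^sup>2) * ennreal (b\<^sup>2)"
      using L2e_eq[OF assms(1)] L2e_eq[OF assms(2)] by (simp add: a_def b_def)
    also have "\<dots> = ennreal (a\<^sup>2 * b\<^sup>2)" by (rule ennreal_mult[symmetric]) auto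
    finally show ?thesis by (simp add: power_mult_distrib)
  qed
  finally have cs0: "(\<integral>\<^sup>+t. ennreal \<bar>x t\<bar> * ennreal \<bar>y t\<bar> \<partial>I01)\<^sup>2 \<le> ennreal ((a * b)\<^sup>2)" .
  have cs: "(\<integral>\<^sup>+t. ennreal \<bar>x t\<bar> * ennreal \<bar>y t\<bar> \<partial>I01) \<le> ennreal (a * b)"
    by (rule ennreal_sq_le[OF cs0]) (use ab in simp)
  have "L2e (\<lambda>t. x t + y t) \<le> (\<integral>\<^sup>+t. ennreal ((x t)\<^sup>2) + ennreal ((y t)\<^sup>2) + 2 * (ennreal \<bar>x t\<bar> * ennreal \<bar>y t\<bar>) \<partial>I01)"
    unfolding L2e_def
  proof (rule nn_integral_mono)
    fix t
    have "(x t + y t)\<^sup>2 \<le> (x t)\<^sup>2 + (y t)\<^sup>2 + 2 * (\<bar>x t\<bar> * \<bar>y t\<bar>)"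
      by (rule sq_sum_le)
    then have "ennreal ((x t + y t)\<^sup>2) \<le> ennreal ((x t)\<^sup>2 + (y t)\<^sup>2 + 2 * (\<bar>x t\<bar> * \<bar>y t\<bar>))"
      by (rule ennreal_leI)
    also have "\<dots> = ennreal ((x t)\<^sup>2) + ennreal ((y t)\<^sup>2) + 2 * ennreal (\<bar>x t\<bar> * \<bar>y t\<bar>)"
      by (rule ennreal_sum3) auto
    also have "ennreal (\<bar>x t\<bar> * \<bar>y t\<bar>) = ennreal \<bar>x t\<bar> * ennreal \<bar>y t\<bar>"
      by (rule ennreal_mult) auto
    finally show "ennreal ((x t + y t)\<^sup>2) \<le> ennreal ((x t)\<^sup>2) + ennreal ((y t)\<^sup>2) + 2 * (ennreal \<bar>x t\<bar> * ennreal \<bar>y t\<bar>)" .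
  qed
  also have "\<dots> = (\<integral>\<^sup>+t. ennreal ((x t)\<^sup>2) + ennreal ((y t)\<^sup>2) \<partial>I01) + (\<integral>\<^sup>+t. 2 * (ennreal \<bar>x t\<bar> * ennreal \<bar>y t\<bar>) \<partial>I01)"
    by (rule nn_integral_add) measurable
  also have "(\<integral>\<^sup>+t. ennreal ((x t)\<^sup>2) + ennreal ((y t)\<^sup>2) \<partial>I01) = L2e x + L2e y"
    unfolding L2e_def by (rule nn_integral_add) measurable
  also have "(\<integral>\<^sup>+t. 2 * (ennreal \<bar>x t\<bar> * ennreal \<bar>y t\<bar>) \<partial>I01) = 2 * (\<integral>\<^sup>+t. ennreal \<bar>x t\<bar> * ennreal \<bar>y t\<bar> \<partial>I01)"
    by (rule nn_integral_cmult) measurable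
  also have "L2e x + L2e y + 2 * (\<integral>\<^sup>+t. ennreal \<bar>x t\<bar> * ennreal \<bar>y t\<bar> \<partial>I01) \<le> ennreal (a\<^sup>2) + ennreal (b\<^sup>2) + 2 * ennreal (a * b)"
  proof -
    have e1: "L2e x = ennreal (a\<^sup>2)" using L2e_eq[OF assms(1)] by (simp add: a_def)
    have e2: "L2e y = ennreal (b\<^sup>2)" using L2e_eq[OF assms(2)] by (simp add: b_def)
    show ?thesis unfolding e1 e2 by (intro add_mono order.refl mult_left_mono cs) simp
  qed
  also have "\<dots> = ennreal (a\<^sup>2 + b\<^sup>2 + 2 * (a * b))"
    using ab by (intro ennreal_sum3[symmetric]) auto
  also have "a\<^sup>2 + b\<^sup>2 + 2 * (a * b) = (a + b)\<^sup>2" by (simp add: power2_sum)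
  finally have le: "L2e (\<lambda>t. x t + y t) \<le> ennreal ((a + b)\<^sup>2)" .
  have fin: "L2e (\<lambda>t. x t + y t) < \<infinity>" by (rule le_less_trans[OF le]) simp
  have "enn2real (L2e (\<lambda>t. x t + y t)) \<le> (a + b)\<^sup>2"
    using le ab by (intro enn2real_leI) auto
  then have "nrmF (\<lambda>t. x t + y t) \<le> sqrt ((a + b)\<^sup>2)" unfolding nrmF_def by (rule real_sqrt_le_mono)
  then have "nrmF (\<lambda>t. x t + y t) \<le> a + b" using ab by simp
  moreover have "(\<lambda>t. x t + y t) \<in> borel_measurable I01" by measurable
  ultimately show ?thesis using fin unfolding EF_def a_def b_def by blast
qed

lemma EF_cmult:
  fixes x :: "real \<Rightarrow> real"
  assumes "x \<in> EF"
  shows "(\<lambda>t. c * x t) \<in> EF \<and> nrmF (\<lambda>t. c * x t) = \<bar>c\<bar> * nrmF x"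
proof -
  have [measurable]: "x \<in> borel_measurable I01" using assms by (simp add: EF_def)
  have e: "L2e (\<lambda>t. c * x t) = ennreal (c\<^sup>2) * L2e x" by (rule L2e_cmult) simp
  have "L2e (\<lambda>t. c * x t) < \<infinity>" using assms unfolding e EF_def by (simp add: ennreal_mult_less_top)
  moreover have "nrmF (\<lambda>t. c * x t) = \<bar>c\<bar> * nrmF x"
    unfolding nrmF_def e by (simp add: enn2real_mult real_sqrt_mult)
  ultimately show ?thesis by (simp add: EF_def)
qed

lemma NF_ind: "0 \<le> s \<Longrightarrow> s \<le> 1 \<Longrightarrow> nrmF (indicator {0<..<s}) = sqrt s"
proof -
  assume s: "0 \<le> s" "s \<le> 1"
  have "L2e (indicator {0<..<s}) = (\<integral>\<^sup>+t. indicator {0<..<s} t \<partial>I01)"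
    unfolding L2e_def by (intro nn_integral_cong) (auto simp: indicator_def)
  also have "\<dots> = ennreal s"
  proof -
    have "{0<..<s} \<inter> {0..1} = {0<..<s}" using s by auto
    then have "{0<..<s} \<in> sets I01" using sets_I01_borel[of "{0<..<s}"] by simp
    then show ?thesis using emeasure_I01_Ioo[OF s] by simp
  qed
  finally show ?thesis unfolding nrmF_def using s by simp
qed


lemma EF_meas: "x \<in> EF \<Longrightarrow> x \<in> borel_measurable I01" by (simp add: EF_def)

lemma EF_diff:
  fixes x y :: "real \<Rightarrow> real"
  assumes "x \<in> EF" "y \<in> EF"
  shows "(\<lambda>t. x t - y t) \<in> EF \<and> nrmF (\<lambda>t. x t - y t) \<le> nrmF x + nrmF y"
proof -
  have m: "(\<lambda>t. (-1) * y t) \<in> EF \<and> nrmF (\<lambda>t. (-1) * y t) = nrmF y" using EF_cmult[OF assms(2), of "-1"] by simp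
  have "(\<lambda>t. x t + (-1) * y t) \<in> EF \<and> nrmF (\<lambda>t. x t + (-1) * y t) \<le> nrmF x + nrmF (\<lambda>t. (-1) * y t)"
    by (rule EF_add[OF assms(1) m[THEN conjunct1]])
  then show ?thesis using m by simp
qed

lemma NF_sym: "nrmF (\<lambda>t. x t - y t) = nrmF (\<lambda>t. y t - x t)"
  unfolding nrmF_def L2e_def by (simp add: power2_commute)

lemma L2e_sym: "L2e (\<lambda>t. x t - y t) = L2e (\<lambda>t. y t - x t)"
  unfolding L2e_def by (simp add: power2_commute)

lemma EF_complete:
  fixes x :: "nat \<Rightarrow> real \<Rightarrow> real"
  assumes xE: "\<And>n. x n \<in> EF"
    and C: "\<forall>e>0. \<exists>M. \<forall>m\<ge>M. \<forall>n\<ge>M. nrmF (\<lambda>t. x m t - x n t) < e"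
  shows "\<exists>y\<in>EF. \<forall>e>0. \<exists>M. \<forall>n\<ge>M. nrmF (\<lambda>t. x n t - y t) \<le> e"
proof -
  have [measurable]: "x n \<in> borel_measurable I01" for n using xE by (simp add: EF_def)
  have "\<forall>k. \<exists>M. \<forall>m\<ge>M. \<forall>n\<ge>M. nrmF (\<lambda>t. x m t - x n t) < (1/2)^k"
    using C by auto
  then obtain M where M: "\<And>k m n. m \<ge> M k \<Longrightarrow> n \<ge> M k \<Longrightarrow> nrmF (\<lambda>t. x m t - x n t) < (1/2)^k"
    by metis
  define r where "r k = k + (\<Sum>i\<le>k. M i)" for k
  have rM: "M k \<le> r k" for k
    unfolding r_def using member_le_sum[of k "{..k}" M] by auto
  have rmono: "r k \<le> r l" if "k \<le> l" for k l
    unfolding r_def using that by (intro add_mono sum_mono2) auto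
  have rk: "k \<le> r k" for k unfolding r_def by simp
  define d where "d k t = x (r (Suc k)) t - x (r k) t" for k t
  have [measurable]: "d k \<in> borel_measurable I01" for k unfolding d_def by measurable
  have dE: "d k \<in> EF" for k unfolding d_def using EF_diff[OF xE xE] by blast
  have dN: "nrmF (d k) < (1/2)^k" for k
    unfolding d_def using rM[of k] rmono[of k "Suc k"] by (intro M) auto
  have "(\<integral>\<^sup>+t. (\<Sum>k. ennreal \<bar>d k t\<bar>) \<partial>I01) = (\<Sum>k. \<integral>\<^sup>+t. ennreal \<bar>d k t\<bar> \<partial>I01)"
    by (rule nn_integral_suminf) measurable
  also have "\<dots> \<le> (\<Sum>k. ennreal ((1/2)^k))"
  proof (intro suminf_le)
    fix k
    have "nrmF (d k) \<le> (1/2)^k" using dN[of k] by simp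
    then show "(\<integral>\<^sup>+t. ennreal \<bar>d k t\<bar> \<partial>I01) \<le> ennreal ((1/2)^k)"
      using L1_le_NF[OF dE, of k] by (meson ennreal_leI order.trans)
  qed auto
  also have "\<dots> = ennreal (\<Sum>k. (1/2)^k)"
    by (intro suminf_ennreal2) auto
  finally have le2: "(\<integral>\<^sup>+t. (\<Sum>k. ennreal \<bar>d k t\<bar>) \<partial>I01) \<le> ennreal (\<Sum>k. (1/2::real)^k)" .
  have "(\<integral>\<^sup>+t. (\<Sum>k. ennreal \<bar>d k t\<bar>) \<partial>I01) \<noteq> \<infinity>"
    using neq_top_trans[OF ennreal_neq_top le2] by simp
  then have AEfin: "AE t in I01. (\<Sum>k. ennreal \<bar>d k t\<bar>) \<noteq> \<infinity>"
    by (intro nn_integral_PInf_AE) measurable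
  define y where "y t = lim (\<lambda>k. x (r k) t)" for t
  have ymeas[measurable]: "y \<in> borel_measurable I01" unfolding y_def by measurable
  have AEconv: "AE t in I01. (\<lambda>k. x (r k) t) \<longlonglongrightarrow> y t"
    using AEfin
  proof (rule eventually_mono)
    fix t assume fin: "(\<Sum>k. ennreal \<bar>d k t\<bar>) \<noteq> \<infinity>"
    have "summable (\<lambda>k. \<bar>d k t\<bar>)" using fin by (intro summable_suminf_not_top) auto
    then have "summable (\<lambda>k. d k t)" by (rule summable_rabs_cancel)
    then have "(\<lambda>n. \<Sum>k<n. d k t) \<longlonglongrightarrow> (\<Sum>k. d k t)" by (rule summable_LIMSEQ)
    then have "(\<lambda>n. x (r 0) t + (\<Sum>k<n. d k t)) \<longlonglongrightarrow> x (r 0) t + (\<Sum>k. d k t)"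
      by (intro tendsto_intros)
    moreover have "x (r 0) t + (\<Sum>k<n. d k t) = x (r n) t" for n
      unfolding d_def by (subst sum_lessThan_telescope[where f="\<lambda>k. x (r k) t"]) simp
    ultimately have "convergent (\<lambda>k. x (r k) t)" by (auto simp: convergent_def)
    then show "(\<lambda>k. x (r k) t) \<longlonglongrightarrow> y t" unfolding y_def by (simp add: convergent_LIMSEQ_iff)
  qed
  have key: "L2e (\<lambda>t. x n t - y t) \<le> ennreal (e\<^sup>2)"
    if e: "e > 0" and n: "\<forall>m\<ge>Me. \<forall>n\<ge>Me. nrmF (\<lambda>t. x m t - x n t) < e" "n \<ge> Me" for e Me n
  proof -
    have "L2e (\<lambda>t. x n t - y t) = (\<integral>\<^sup>+t. liminf (\<lambda>k. ennreal ((x n t - x (r k) t)\<^sup>2)) \<partial>I01)"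
      unfolding L2e_def
    proof (rule nn_integral_cong_AE)
      show "AE t in I01. ennreal ((x n t - y t)\<^sup>2) = liminf (\<lambda>k. ennreal ((x n t - x (r k) t)\<^sup>2))"
        using AEconv
      proof (rule eventually_mono)
        fix t assume "(\<lambda>k. x (r k) t) \<longlonglongrightarrow> y t"
        then have "(\<lambda>k. ennreal ((x n t - x (r k) t)\<^sup>2)) \<longlonglongrightarrow> ennreal ((x n t - y t)\<^sup>2)"
          by (intro tendsto_intros)
        then show "ennreal ((x n t - y t)\<^sup>2) = liminf (\<lambda>k. ennreal ((x n t - x (r k) t)\<^sup>2))"
          by (intro lim_imp_Liminf[symmetric]) auto
      qed
    qed
    also have "\<dots> \<le> liminf (\<lambda>k. L2e (\<lambda>t. x n t - x (r k) t))"
      unfolding L2e_def by (rule nn_integral_liminf) measurable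
    also have "\<dots> \<le> ennreal (e\<^sup>2)"
    proof (rule Liminf_le)
      show "\<forall>\<^sub>F k in sequentially. L2e (\<lambda>t. x n t - x (r k) t) \<le> ennreal (e\<^sup>2)"
        unfolding eventually_sequentially
      proof (intro exI allI impI)
        fix k assume k: "k \<ge> Me"
        have de: "(\<lambda>t. x n t - x (r k) t) \<in> EF" using EF_diff[OF xE xE] by blast
        have "nrmF (\<lambda>t. x n t - x (r k) t) < e" using n k rk[of k] by auto
        then have "(nrmF (\<lambda>t. x n t - x (r k) t))\<^sup>2 \<le> e\<^sup>2"
          using NF_nonneg by (intro power_mono) auto
        then show "L2e (\<lambda>t. x n t - x (r k) t) \<le> ennreal (e\<^sup>2)"
          using L2e_eq[OF de] by (simp add: ennreal_leI)
      qed
    qed simp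
    finally show ?thesis .
  qed
  obtain M1 where M1: "\<forall>m\<ge>M1. \<forall>n\<ge>M1. nrmF (\<lambda>t. x m t - x n t) < 1" using C by (metis zero_less_one)
  have dy: "(\<lambda>t. x M1 t - y t) \<in> EF"
  proof -
    have k1: "L2e (\<lambda>t. x M1 t - y t) \<le> ennreal (1\<^sup>2)" using M1 by (intro key) auto
    have "L2e (\<lambda>t. x M1 t - y t) < \<infinity>" by (rule le_less_trans[OF k1]) simp
    moreover have "(\<lambda>t. x M1 t - y t) \<in> borel_measurable I01" by measurable
    ultimately show ?thesis unfolding EF_def by blast
  qed
  have yE: "y \<in> EF"
  proof -
    have "(\<lambda>t. x M1 t - (x M1 t - y t)) \<in> EF" using EF_diff[OF xE dy] by blast
    then show ?thesis by simp
  qed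
  show ?thesis
  proof (intro bexI[OF _ yE] allI impI)
    fix e :: real assume e: "e > 0"
    obtain Me where Me: "\<forall>m\<ge>Me. \<forall>n\<ge>Me. nrmF (\<lambda>t. x m t - x n t) < e" using C e by blast
    show "\<exists>M. \<forall>n\<ge>M. nrmF (\<lambda>t. x n t - y t) \<le> e"
    proof (intro exI allI impI)
      fix n assume n: "n \<ge> Me"
      have de: "(\<lambda>t. x n t - y t) \<in> EF" using EF_diff[OF xE yE] by blast
      have "ennreal ((nrmF (\<lambda>t. x n t - y t))\<^sup>2) \<le> ennreal (e\<^sup>2)"
        using key[OF e Me n] L2e_eq[OF de] by simp
      then have "(nrmF (\<lambda>t. x n t - y t))\<^sup>2 \<le> e\<^sup>2" using e by simp
      then show "nrmF (\<lambda>t. x n t - y t) \<le> e"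
        using e NF_nonneg[of "\<lambda>t. x n t - y t"] by (simp add: power2_le_iff_abs_le)
    qed
  qed
qed


lemma ennreal_lt_top_add: "(a::ennreal) < \<infinity> \<Longrightarrow> b < \<infinity> \<Longrightarrow> a + b < \<infinity>"
  by (simp add: top.not_eq_extremum[symmetric])

lemma enn2real_add_le:
  fixes a b c :: ennreal
  assumes "a < \<infinity>" "b < \<infinity>" "c \<le> a + b"
  shows "enn2real c \<le> enn2real a + enn2real b"
proof -
  have "enn2real c \<le> enn2real (a + b)" using assms ennreal_lt_top_add by (intro enn2real_mono) auto
  also have "enn2real (a + b) = enn2real a + enn2real b"
    using assms by (intro enn2real_plus) auto
  finally show ?thesis .
qed

lemma symmetric_spaceI:
  fixes E :: "(real \<Rightarrow> real) set" and N :: "(real \<Rightarrow> real) \<Rightarrow> real"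
  assumes "E \<subseteq> borel_measurable I01" "(\<lambda>t. 0) \<in> E"
  and "\<And>x y. x\<in>E \<Longrightarrow> y\<in>E \<Longrightarrow> (\<lambda>t. x t + y t) \<in> E \<and> N (\<lambda>t. x t + y t) \<le> N x + N y"
  and "\<And>x c. x\<in>E \<Longrightarrow> (\<lambda>t. c * x t) \<in> E \<and> N (\<lambda>t. c * x t) = \<bar>c\<bar> * N x"
  and "\<And>x. x\<in>E \<Longrightarrow> N x \<ge> 0" "\<And>x. x\<in>E \<Longrightarrow> N x = 0 \<longleftrightarrow> (AE t in I01. x t = 0)"
  and "\<And>x. (\<forall>n. x n \<in> E) \<Longrightarrow> (\<forall>e>0. \<exists>M. \<forall>m\<ge>M. \<forall>n\<ge>M. N (\<lambda>t. x m t - x n t) < e) \<Longrightarrow>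
          (\<exists>y\<in>E. (\<lambda>n. N (\<lambda>t. x n t - y t)) \<longlonglongrightarrow> 0)"
  and "\<And>x y. y \<in> E \<Longrightarrow> x \<in> borel_measurable I01 \<Longrightarrow> (AE t in I01. \<bar>x t\<bar> \<le> \<bar>y t\<bar>) \<Longrightarrow> x \<in> E \<and> N x \<le> N y"
  and "\<And>x y. y \<in> E \<Longrightarrow> x \<in> borel_measurable I01 \<Longrightarrow>
        (\<forall>\<tau>>0. emeasure I01 {t\<in>{0..1}. \<bar>x t\<bar> > \<tau>} = emeasure I01 {t\<in>{0..1}. \<bar>y t\<bar> > \<tau>}) \<Longrightarrow> x \<in> E \<and> N x = N y"
  shows "symmetric_space E N"
  unfolding symmetric_space_def
  apply (intro conjI)
  subgoal by (rule assms(1))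
  subgoal by (rule assms(2))
  subgoal using assms(3) by blast
  subgoal using assms(4) by blast
  subgoal using assms(5) by blast
  subgoal using assms(6) by blast
  subgoal using assms(3) by blast
  subgoal using assms(4) by blast
  subgoal by (intro allI impI) (rule assms(7))
  subgoal by (intro allI impI) (rule assms(8))
  subgoal by (intro allI impI) (rule assms(9))
  done

lemma NF_zero_iff: "x \<in> EF \<Longrightarrow> nrmF x = 0 \<longleftrightarrow> (AE t in I01. x t = 0)"
proof -
  assume x: "x \<in> EF"
  have fin: "L2e x < \<infinity>" using x by (simp add: EF_def)
  have "nrmF x = 0 \<longleftrightarrow> enn2real (L2e x) = 0" unfolding nrmF_def by simp
  also have "\<dots> \<longleftrightarrow> L2e x = 0" using fin by (auto simp: enn2real_eq_0_iff)
  finally show ?thesis using L2e_zero_iff[OF EF_meas[OF x]] by simp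
qed

lemma EF_ideal:
  fixes x y :: "real \<Rightarrow> real"
  assumes "y \<in> EF" "x \<in> borel_measurable I01" "AE t in I01. \<bar>x t\<bar> \<le> \<bar>y t\<bar>"
  shows "x \<in> EF \<and> nrmF x \<le> nrmF y"
proof -
  have le: "L2e x \<le> L2e y" by (rule L2e_mono[OF assms(3)])
  have fin: "L2e y < \<infinity>" using assms(1) by (simp add: EF_def)
  have "L2e x < \<infinity>" by (rule le_less_trans[OF le fin])
  moreover have "enn2real (L2e x) \<le> enn2real (L2e y)" using le fin by (intro enn2real_mono) auto
  then have "nrmF x \<le> nrmF y" unfolding nrmF_def by (rule real_sqrt_le_mono)
  ultimately show ?thesis using assms(2) by (simp add: EF_def)
qed

lemma LIMSEQ_from_le:
  fixes f :: "nat \<Rightarrow> real"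
  assumes "\<And>n. f n \<ge> 0" "\<forall>e>0. \<exists>M. \<forall>n\<ge>M. f n \<le> e"
  shows "f \<longlonglongrightarrow> 0"
proof (rule LIMSEQ_I)
  fix r :: real assume r: "0 < r"
  then have "r / 2 > 0" by simp
  then obtain M where M: "\<forall>n\<ge>M. f n \<le> r/2" using assms(2) by blast
  have "\<forall>n\<ge>M. norm (f n - 0) < r"
  proof (intro allI impI)
    fix n assume "n \<ge> M"
    then have "f n \<le> r/2" using M by blast
    then show "norm (f n - 0) < r" using assms(1)[of n] r by simp
  qed
  then show "\<exists>no. \<forall>n\<ge>no. norm (f n - 0) < r" by blast
qed

lemma symmetric_EF: "symmetric_space EF nrmF"
proof (rule symmetric_spaceI)
  show "EF \<subseteq> borel_measurable I01" by (auto simp: EF_def)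
  show "(\<lambda>t. 0) \<in> EF" by (simp add: EF_def L2e_def)
  show "\<And>x y. x \<in> EF \<Longrightarrow> y \<in> EF \<Longrightarrow> (\<lambda>t. x t + y t) \<in> EF \<and> nrmF (\<lambda>t. x t + y t) \<le> nrmF x + nrmF y"
    by (rule EF_add)
  show "\<And>x c. x \<in> EF \<Longrightarrow> (\<lambda>t. c * x t) \<in> EF \<and> nrmF (\<lambda>t. c * x t) = \<bar>c\<bar> * nrmF x"
    by (rule EF_cmult)
  show "\<And>x. x \<in> EF \<Longrightarrow> nrmF x \<ge> 0" by (rule NF_nonneg)
  show "\<And>x. x \<in> EF \<Longrightarrow> nrmF x = 0 \<longleftrightarrow> (AE t in I01. x t = 0)" by (rule NF_zero_iff)
  show "\<exists>y\<in>EF. (\<lambda>n. nrmF (\<lambda>t. x n t - y t)) \<longlonglongrightarrow> 0"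
    if A: "\<forall>n. x n \<in> EF" and B: "\<forall>e>0. \<exists>M. \<forall>m\<ge>M. \<forall>n\<ge>M. nrmF (\<lambda>t. x m t - x n t) < e" for x
  proof -
    have xs: "\<And>n. x n \<in> EF" using A by blast
    obtain y where "y \<in> EF" "\<forall>e>0. \<exists>M. \<forall>n\<ge>M. nrmF (\<lambda>t. x n t - y t) \<le> e"
      using EF_complete[OF xs B] by blast
    then show ?thesis by (intro bexI[of _ y] LIMSEQ_from_le NF_nonneg) auto
  qed
  show "\<And>x y. y \<in> EF \<Longrightarrow> x \<in> borel_measurable I01 \<Longrightarrow> (AE t in I01. \<bar>x t\<bar> \<le> \<bar>y t\<bar>) \<Longrightarrow> x \<in> EF \<and> nrmF x \<le> nrmF y"
    by (rule EF_ideal)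
  show "x \<in> EF \<and> nrmF x = nrmF y"
    if y: "y \<in> EF" and x: "x \<in> borel_measurable I01"
    and eq: "\<forall>\<tau>>0. emeasure I01 {t\<in>{0..1}. \<bar>x t\<bar> > \<tau>} = emeasure I01 {t\<in>{0..1}. \<bar>y t\<bar> > \<tau>}" for x y
  proof -
    have "L2e x = L2e y" using L2e_equimeas[OF x EF_meas[OF y] eq] .
    then show ?thesis using x y by (simp add: EF_def nrmF_def)
  qed
qed

definition EE :: "(real \<Rightarrow> real) set" where
  "EE = {x \<in> EF. NMe x < \<infinity>}"

definition nrmE :: "(real \<Rightarrow> real) \<Rightarrow> real" where
  "nrmE x = nrmF x + enn2real (NMe x)"

lemma NE_ge_NF: "nrmF x \<le> nrmE x" unfolding nrmE_def by simp

lemma NE_nonneg: "nrmE x \<ge> 0" unfolding nrmE_def using NF_nonneg[of x] by simp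

lemma EE_EF: "x \<in> EE \<Longrightarrow> x \<in> EF" by (simp add: EE_def)
lemma EE_fin: "x \<in> EE \<Longrightarrow> NMe x < \<infinity>" unfolding EE_def by blast
lemma EE_meas: "x \<in> EE \<Longrightarrow> x \<in> borel_measurable I01" by (simp add: EE_def EF_def)

lemma NMe_diff:
  fixes x y :: "real \<Rightarrow> real"
  assumes [measurable]: "x \<in> borel_measurable I01" "y \<in> borel_measurable I01"
  shows "NMe (\<lambda>t. x t - y t) \<le> NMe x + NMe y"
proof -
  have "NMe (\<lambda>t. x t + (-1) * y t) \<le> NMe x + NMe (\<lambda>t. (-1) * y t)"
    by (rule NMe_add) auto
  also have "NMe (\<lambda>t. (-1) * y t) = NMe y" by (subst NMe_cmult) auto
  finally show ?thesis by simp
qed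

lemma EE_add:
  fixes x y :: "real \<Rightarrow> real"
  assumes "x \<in> EE" "y \<in> EE"
  shows "(\<lambda>t. x t + y t) \<in> EE \<and> nrmE (\<lambda>t. x t + y t) \<le> nrmE x + nrmE y"
proof -
  have F: "(\<lambda>t. x t + y t) \<in> EF \<and> nrmF (\<lambda>t. x t + y t) \<le> nrmF x + nrmF y"
    by (rule EF_add[OF EE_EF[OF assms(1)] EE_EF[OF assms(2)]])
  have M: "NMe (\<lambda>t. x t + y t) \<le> NMe x + NMe y"
    by (rule NMe_add[OF EE_meas[OF assms(1)] EE_meas[OF assms(2)]])
  have fin: "NMe x < \<infinity>" "NMe y < \<infinity>" using EE_fin[OF assms(1)] EE_fin[OF assms(2)] by auto
  have fin2: "NMe (\<lambda>t. x t + y t) < \<infinity>" by (rule le_less_trans[OF M ennreal_lt_top_add[OF fin]])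
  have "enn2real (NMe (\<lambda>t. x t + y t)) \<le> enn2real (NMe x) + enn2real (NMe y)"
    by (rule enn2real_add_le[OF fin M])
  then show ?thesis using F fin2 unfolding EE_def nrmE_def by simp
qed

lemma EE_cmult:
  fixes x :: "real \<Rightarrow> real"
  assumes "x \<in> EE"
  shows "(\<lambda>t. c * x t) \<in> EE \<and> nrmE (\<lambda>t. c * x t) = \<bar>c\<bar> * nrmE x"
proof -
  have F: "(\<lambda>t. c * x t) \<in> EF \<and> nrmF (\<lambda>t. c * x t) = \<bar>c\<bar> * nrmF x"
    by (rule EF_cmult[OF EE_EF[OF assms]])
  have M: "NMe (\<lambda>t. c * x t) = ennreal \<bar>c\<bar> * NMe x"
    by (rule NMe_cmult[OF EE_meas[OF assms]])
  have fin: "NMe x < \<infinity>" using EE_fin[OF assms(1)] by simp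
  have fin2: "NMe (\<lambda>t. c * x t) < \<infinity>" unfolding M using fin by (simp add: ennreal_mult_less_top)
  have "enn2real (NMe (\<lambda>t. c * x t)) = \<bar>c\<bar> * enn2real (NMe x)" unfolding M by (simp add: enn2real_mult)
  then show ?thesis using F fin2 unfolding EE_def nrmE_def by (simp add: distrib_left)
qed

lemma EE_ideal:
  fixes x y :: "real \<Rightarrow> real"
  assumes "y \<in> EE" "x \<in> borel_measurable I01" "AE t in I01. \<bar>x t\<bar> \<le> \<bar>y t\<bar>"
  shows "x \<in> EE \<and> nrmE x \<le> nrmE y"
proof -
  have F: "x \<in> EF \<and> nrmF x \<le> nrmF y" by (rule EF_ideal[OF EE_EF[OF assms(1)] assms(2,3)])
  have M: "NMe x \<le> NMe y" by (rule NMe_mono[OF assms(3)])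
  have fin: "NMe y < \<infinity>" using EE_fin[OF assms(1)] by simp
  have "NMe x < \<infinity>" by (rule le_less_trans[OF M fin])
  moreover have "enn2real (NMe x) \<le> enn2real (NMe y)" using M fin by (intro enn2real_mono) auto
  ultimately show ?thesis using F unfolding EE_def nrmE_def by simp
qed


lemma EE_diff:
  fixes x y :: "real \<Rightarrow> real"
  assumes "x \<in> EE" "y \<in> EE"
  shows "(\<lambda>t. x t - y t) \<in> EE"
proof -
  have m: "(\<lambda>t. (-1) * y t) \<in> EE" using EE_cmult[OF assms(2), of "-1"] by blast
  have "(\<lambda>t. x t + (-1) * y t) \<in> EE" using EE_add[OF assms(1) m] by blast
  then show ?thesis by simp
qed

lemma Mbound_lemma:
  fixes x :: "nat \<Rightarrow> real \<Rightarrow> real" and y :: "real \<Rightarrow> real"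
  assumes xE: "\<And>n. x n \<in> EE" and yF: "y \<in> EF"
    and yl: "\<forall>e>0. \<exists>M. \<forall>n\<ge>M. nrmF (\<lambda>t. x n t - y t) \<le> e"
    and e: "e > 0" and Me: "\<forall>m\<ge>Me. \<forall>n\<ge>Me. nrmE (\<lambda>t. x m t - x n t) < e" and n: "n \<ge> Me"
  shows "NMe (\<lambda>t. x n t - y t) \<le> ennreal e"
  unfolding NMe_def
proof (rule SUP_least)
  have [measurable]: "x k \<in> borel_measurable I01" for k using EE_meas[OF xE] by blast
  have [measurable]: "y \<in> borel_measurable I01" using yF by (simp add: EF_def)
  have xF: "x k \<in> EF" for k using EE_EF[OF xE] by blast
  fix t :: real assume t: "t \<in> {0<..1}"
  define w where "w = phi t / t"
  have w: "w > 0" using t phi_pos[of t] by (auto simp: w_def)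
  show "ennreal (phi t / t) * Qe t (\<lambda>s. x n s - y s) \<le> ennreal e"
    unfolding w_def[symmetric]
  proof (rule ennreal_le_epsilon)
    fix \<delta> :: real assume \<delta>: "0 < \<delta>"
    have dw: "\<delta> / w > 0" using \<delta> w by simp
    obtain M2 where M2: "\<forall>m\<ge>M2. nrmF (\<lambda>s. x m s - y s) \<le> \<delta> / w" using yl dw by blast
    define m where "m = max Me M2"
    have m: "m \<ge> Me" "m \<ge> M2" by (auto simp: m_def)
    have dm: "(\<lambda>s. x n s - x m s) \<in> EE" by (rule EE_diff[OF xE xE])
    have dF: "(\<lambda>s. x m s - y s) \<in> EF" using EF_diff[OF xF yF] by blast
    have "Qe t (\<lambda>s. x n s - y s) = Qe t (\<lambda>s. (x n s - x m s) + (x m s - y s))" by simp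
    also have "\<dots> \<le> Qe t (\<lambda>s. x n s - x m s) + Qe t (\<lambda>s. x m s - y s)"
      using t by (intro Qe_add) auto
    finally have a: "Qe t (\<lambda>s. x n s - y s) \<le> Qe t (\<lambda>s. x n s - x m s) + Qe t (\<lambda>s. x m s - y s)" .
    have "Qe t (\<lambda>s. x m s - y s) \<le> ennreal (nrmF (\<lambda>s. x m s - y s))"
      using Qe_le_L1 L1_le_NF[OF dF] by (rule order.trans)
    also have "\<dots> \<le> ennreal (\<delta> / w)" using M2 m by (intro ennreal_leI) auto
    finally have b: "Qe t (\<lambda>s. x m s - y s) \<le> ennreal (\<delta> / w)" .
    have 1: "Qe t (\<lambda>s. x n s - y s) \<le> Qe t (\<lambda>s. x n s - x m s) + ennreal (\<delta> / w)"
      by (rule order.trans[OF a add_left_mono[OF b]])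
    have "ennreal w * Qe t (\<lambda>s. x n s - y s) \<le> ennreal w * (Qe t (\<lambda>s. x n s - x m s) + ennreal (\<delta> / w))"
      using 1 by (rule mult_left_mono) simp
    also have "\<dots> = ennreal w * Qe t (\<lambda>s. x n s - x m s) + ennreal w * ennreal (\<delta> / w)"
      by (simp add: distrib_left)
    also have "ennreal w * ennreal (\<delta> / w) = ennreal \<delta>"
    proof -
      have "ennreal w * ennreal (\<delta> / w) = ennreal (w * (\<delta> / w))"
        using w \<delta> by (intro ennreal_mult[symmetric]) auto
      also have "w * (\<delta> / w) = \<delta>" using w by simp
      finally show ?thesis .
    qed
    also have "ennreal w * Qe t (\<lambda>s. x n s - x m s) \<le> NMe (\<lambda>s. x n s - x m s)"
      unfolding NMe_def w_def using t by (intro SUP_upper) auto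
    also have "NMe (\<lambda>s. x n s - x m s) \<le> ennreal e"
    proof -
      have fin: "NMe (\<lambda>s. x n s - x m s) < \<infinity>" by (rule EE_fin[OF dm])
      have "enn2real (NMe (\<lambda>s. x n s - x m s)) \<le> nrmE (\<lambda>s. x n s - x m s)"
        unfolding nrmE_def using NF_nonneg by simp
      also have "\<dots> < e" using Me n m by auto
      finally have "enn2real (NMe (\<lambda>s. x n s - x m s)) \<le> e" by simp
      then show ?thesis using fin by (intro enn2real_le) auto
    qed
    finally show "ennreal w * Qe t (\<lambda>s. x n s - y s) \<le> ennreal e + ennreal \<delta>" by simp
  qed
qed

lemma EE_complete:
  fixes x :: "nat \<Rightarrow> real \<Rightarrow> real"
  assumes xE: "\<And>n. x n \<in> EE"
    and C: "\<forall>e>0. \<exists>M. \<forall>m\<ge>M. \<forall>n\<ge>M. nrmE (\<lambda>t. x m t - x n t) < e"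
  shows "\<exists>y\<in>EE. (\<lambda>n. nrmE (\<lambda>t. x n t - y t)) \<longlonglongrightarrow> 0"
proof -
  have xF: "x n \<in> EF" for n using EE_EF[OF xE] by blast
  have [measurable]: "x n \<in> borel_measurable I01" for n using EE_meas[OF xE] by blast
  have CF: "\<forall>e>0. \<exists>M. \<forall>m\<ge>M. \<forall>n\<ge>M. nrmF (\<lambda>t. x m t - x n t) < e"
  proof (intro allI impI)
    fix e :: real assume "e > 0"
    then obtain M where "\<forall>m\<ge>M. \<forall>n\<ge>M. nrmE (\<lambda>t. x m t - x n t) < e" using C by blast
    then show "\<exists>M. \<forall>m\<ge>M. \<forall>n\<ge>M. nrmF (\<lambda>t. x m t - x n t) < e"
      using NE_ge_NF by (meson le_less_trans)
  qed
  obtain y where yF: "y \<in> EF" and yl: "\<forall>e>0. \<exists>M. \<forall>n\<ge>M. nrmF (\<lambda>t. x n t - y t) \<le> e"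
    using EF_complete[OF xF CF] by blast
  have [measurable]: "y \<in> borel_measurable I01" using yF by (simp add: EF_def)
  obtain M1 where M1: "\<forall>m\<ge>M1. \<forall>n\<ge>M1. nrmE (\<lambda>t. x m t - x n t) < 1" using C zero_less_one by blast
  have yE: "y \<in> EE"
  proof -
    have "NMe (\<lambda>t. x M1 t - (x M1 t - y t)) \<le> NMe (x M1) + NMe (\<lambda>t. x M1 t - y t)"
      by (rule NMe_diff) auto
    also have "NMe (\<lambda>t. x M1 t - y t) \<le> ennreal 1"
      by (rule Mbound_lemma[OF xE yF yl zero_less_one M1]) simp
    finally have le: "NMe y \<le> NMe (x M1) + ennreal 1" by simp
    have "NMe (x M1) + ennreal 1 < \<infinity>" by (rule ennreal_lt_top_add[OF EE_fin[OF xE]]) simp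
    then have "NMe y < \<infinity>" by (rule le_less_trans[OF le])
    then show ?thesis using yF by (simp add: EE_def)
  qed
  show ?thesis
  proof (intro bexI[OF _ yE] LIMSEQ_from_le)
    fix n show "nrmE (\<lambda>t. x n t - y t) \<ge> 0" by (rule NE_nonneg)
  next
    show "\<forall>e>0. \<exists>M. \<forall>n\<ge>M. nrmE (\<lambda>t. x n t - y t) \<le> e"
    proof (intro allI impI)
      fix e :: real assume e: "e > 0"
      have e2: "e / 2 > 0" using e by simp
      obtain Me where Me: "\<forall>m\<ge>Me. \<forall>n\<ge>Me. nrmE (\<lambda>t. x m t - x n t) < e/2" using C e2 by blast
      obtain M2 where M2: "\<forall>n\<ge>M2. nrmF (\<lambda>t. x n t - y t) \<le> e/2" using yl e2 by blast
      show "\<exists>M. \<forall>n\<ge>M. nrmE (\<lambda>t. x n t - y t) \<le> e"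
      proof (intro exI[of _ "max Me M2"] allI impI)
        fix n assume n: "max Me M2 \<le> n"
        have "NMe (\<lambda>t. x n t - y t) \<le> ennreal (e/2)"
          by (rule Mbound_lemma[OF xE yF yl e2 Me]) (use n in simp)
        then have a: "enn2real (NMe (\<lambda>t. x n t - y t)) \<le> e/2" using e by (intro enn2real_leI) auto
        have b: "nrmF (\<lambda>t. x n t - y t) \<le> e/2" using M2 n by simp
        show "nrmE (\<lambda>t. x n t - y t) \<le> e" using a b unfolding nrmE_def by simp
      qed
    qed
  qed
qed

lemma NE_zero_iff: "x \<in> EE \<Longrightarrow> nrmE x = 0 \<longleftrightarrow> (AE t in I01. x t = 0)"
proof -
  assume x: "x \<in> EE"
  show ?thesis
  proof
    assume "nrmE x = 0"
    then have "nrmF x = 0" unfolding nrmE_def using NF_nonneg[of x] enn2real_nonneg[of "NMe x"] by linarith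
    then show "AE t in I01. x t = 0" using NF_zero_iff[OF EE_EF[OF x]] by simp
  next
    assume a: "AE t in I01. x t = 0"
    then have "nrmF x = 0" using NF_zero_iff[OF EE_EF[OF x]] by simp
    moreover have "NMe x = 0" by (rule NMe_AE0[OF a])
    ultimately show "nrmE x = 0" unfolding nrmE_def by simp
  qed
qed

lemma symmetric_EE: "symmetric_space EE nrmE"
proof (rule symmetric_spaceI)
  show "EE \<subseteq> borel_measurable I01" using EE_meas by blast
  show "(\<lambda>t. 0) \<in> EE"
  proof -
    have "NMe (\<lambda>t. 0) = 0" by (rule NMe_AE0) simp
    then show ?thesis by (simp add: EE_def EF_def L2e_def)
  qed
  show "\<And>x y. x \<in> EE \<Longrightarrow> y \<in> EE \<Longrightarrow> (\<lambda>t. x t + y t) \<in> EE \<and> nrmE (\<lambda>t. x t + y t) \<le> nrmE x + nrmE y"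
    by (rule EE_add)
  show "\<And>x c. x \<in> EE \<Longrightarrow> (\<lambda>t. c * x t) \<in> EE \<and> nrmE (\<lambda>t. c * x t) = \<bar>c\<bar> * nrmE x"
    by (rule EE_cmult)
  show "\<And>x. x \<in> EE \<Longrightarrow> nrmE x \<ge> 0" by (rule NE_nonneg)
  show "\<And>x. x \<in> EE \<Longrightarrow> nrmE x = 0 \<longleftrightarrow> (AE t in I01. x t = 0)" by (rule NE_zero_iff)
  show "\<exists>y\<in>EE. (\<lambda>n. nrmE (\<lambda>t. x n t - y t)) \<longlonglongrightarrow> 0"
    if A: "\<forall>n. x n \<in> EE" and B: "\<forall>e>0. \<exists>M. \<forall>m\<ge>M. \<forall>n\<ge>M. nrmE (\<lambda>t. x m t - x n t) < e" for x
  proof -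
    have xs: "\<And>n. x n \<in> EE" using A by blast
    show ?thesis by (rule EE_complete[OF xs B])
  qed
  show "\<And>x y. y \<in> EE \<Longrightarrow> x \<in> borel_measurable I01 \<Longrightarrow> (AE t in I01. \<bar>x t\<bar> \<le> \<bar>y t\<bar>) \<Longrightarrow> x \<in> EE \<and> nrmE x \<le> nrmE y"
    by (rule EE_ideal)
  show "x \<in> EE \<and> nrmE x = nrmE y"
    if y: "y \<in> EE" and x: "x \<in> borel_measurable I01"
    and eq: "\<forall>\<tau>>0. emeasure I01 {t\<in>{0..1}. \<bar>x t\<bar> > \<tau>} = emeasure I01 {t\<in>{0..1}. \<bar>y t\<bar> > \<tau>}" for x y
  proof -
    have "L2e x = L2e y" using L2e_equimeas[OF x EE_meas[OF y] eq] .
    moreover have "NMe x = NMe y" using NMe_equimeas[OF x EE_meas[OF y] eq] .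
    ultimately show ?thesis using x y by (simp add: EE_def EF_def nrmE_def nrmF_def)
  qed
qed


lemma FTC_I01:
  fixes F f :: "real \<Rightarrow> real"
  assumes ab: "0 \<le> a" "a \<le> b" "b \<le> 1"
    and d: "\<And>s. s \<in> {a..b} \<Longrightarrow> (F has_real_derivative f s) (at s)"
    and nn: "\<And>s. s \<in> {a..b} \<Longrightarrow> 0 \<le> f s"
  shows "(\<integral>\<^sup>+s. ennreal (f s) * indicator {a..b} s \<partial>I01) = ennreal (F b - F a)"
proof -
  have hi: "(f has_integral (F b - F a)) {a..b}"
  proof (rule fundamental_theorem_of_calculus[OF ab(2)])
    fix s assume "s \<in> {a..b}"
    then show "(F has_vector_derivative f s) (at s within {a..b})"
      using d by (simp add: has_real_derivative_iff_has_vector_derivative[symmetric] has_field_derivative_at_within)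
  qed
  have "(\<integral>\<^sup>+s. ennreal (f s) * indicator {a..b} s \<partial>I01) =
        (\<integral>\<^sup>+s. ennreal (f s) * indicator {a..b} s * indicator {0..1} s \<partial>lebesgue)"
    by (rule nn_integral_restrict_space) auto
  also have "\<dots> = (\<integral>\<^sup>+s. ennreal (f s) * indicator {a..b} s \<partial>lebesgue)"
    using ab by (intro nn_integral_cong) (auto simp: indicator_def)
  also have "\<dots> = (\<integral>\<^sup>+s. ennreal (f s) * indicator {a..b} s \<partial>lborel)"
    by (rule nn_integral_completion)
  also have "\<dots> = ennreal (F b - F a)"
    by (rule nn_integral_has_integral_lebesgue'[OF nn hi])
  finally show ?thesis .
qed

definition G :: "real \<Rightarrow> real" where "G s = 1 / sqrt (s * (2 - ln s))"
definition H :: "real \<Rightarrow> real" where "H s = 2 * sqrt s / sqrt (2 - ln s)"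
definition F2 :: "real \<Rightarrow> real" where "F2 s = - ln (2 - ln s)"

lemma two_ln_pos: "0 < s \<Longrightarrow> s \<le> 1 \<Longrightarrow> 0 < 2 - ln (s::real)"
proof -
  assume "0 < s" "s \<le> 1"
  then have "ln s \<le> 0" by simp
  then show ?thesis by linarith
qed

lemma G_pos: "0 < s \<Longrightarrow> s \<le> 1 \<Longrightarrow> 0 < G s"
  unfolding G_def using h_pos by simp

lemma G_eq: "0 < s \<Longrightarrow> s \<le> 1 \<Longrightarrow> G s = 1 / phi s"
  unfolding G_def phi_def by simp

lemma G_anti: "0 < s \<Longrightarrow> s \<le> t \<Longrightarrow> t \<le> 1 \<Longrightarrow> G t \<le> G s"
  using phi_mono[of s t] phi_pos[of s] G_eq[of s] G_eq[of t] by (simp add: frac_le)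

lemma G_sq: "0 < s \<Longrightarrow> s \<le> 1 \<Longrightarrow> (G s)\<^sup>2 = 1 / (s * (2 - ln s))"
  unfolding G_def using h_pos[of s] by (simp add: power_divide)

lemma F2_deriv: "0 < s \<Longrightarrow> s \<le> 1 \<Longrightarrow> (F2 has_real_derivative 1 / (s * (2 - ln s))) (at s)"
proof -
  assume s: "0 < s" "s \<le> 1"
  have p: "0 < 2 - ln s" using two_ln_pos[OF s] .
  have "((\<lambda>s. - ln (2 - ln s)) has_real_derivative - ((0 - 1 / s) / (2 - ln s))) (at s)"
    using s p by (intro derivative_eq_intros) auto
  then show ?thesis unfolding F2_def[abs_def] using s p by (simp add: field_simps)
qed

definition Hd :: "real \<Rightarrow> real" where
  "Hd s = 1 / (sqrt s * sqrt (2 - ln s)) + 1 / (sqrt s * (2 - ln s) * sqrt (2 - ln s))"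

lemma Hd_alg:
  fixes a b :: real
  assumes "a > 0" "b > 0"
  shows "((2 * (inverse a / 2)) * b - 2 * a * (inverse b / 2 * (0 - 1 / (a * a)))) / (b * b) = 1 / (a * b) + 1 / (a * (b * b) * b)"
  using assms by (simp add: field_simps)

lemma H_deriv: "0 < s \<Longrightarrow> s \<le> 1 \<Longrightarrow> (H has_real_derivative Hd s) (at s)"
proof -
  assume s: "0 < s" "s \<le> 1"
  have p: "0 < 2 - ln s" using two_ln_pos[OF s] .
  have d1: "((\<lambda>s. 2 * sqrt s) has_real_derivative 2 * (inverse (sqrt s) / 2)) (at s)"
    by (rule DERIV_cmult, rule DERIV_real_sqrt) (use s in simp)
  have d2: "((\<lambda>s. 2 - ln s) has_real_derivative 0 - 1 / s) (at s)"
    by (rule DERIV_diff, rule DERIV_const, rule DERIV_ln_divide) (use s in simp)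
  have d3: "((\<lambda>s. sqrt (2 - ln s)) has_real_derivative inverse (sqrt (2 - ln s)) / 2 * (0 - 1 / s)) (at s)"
    by (rule DERIV_chain2[OF DERIV_real_sqrt d2]) (use p in simp)
  have d4: "((\<lambda>s. 2 * sqrt s / sqrt (2 - ln s)) has_real_derivative
     ((2 * (inverse (sqrt s) / 2)) * sqrt (2 - ln s) - 2 * sqrt s * (inverse (sqrt (2 - ln s)) / 2 * (0 - 1 / s))) / (sqrt (2 - ln s) * sqrt (2 - ln s))) (at s)"
    by (rule DERIV_divide[OF d1 d3]) (use p in simp)
  moreover have "((2 * (inverse (sqrt s) / 2)) * sqrt (2 - ln s) - 2 * sqrt s * (inverse (sqrt (2 - ln s)) / 2 * (0 - 1 / s))) / (sqrt (2 - ln s) * sqrt (2 - ln s)) = Hd s"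
  proof -
    have q: "sqrt s * sqrt s = s" using s by simp
    have r: "sqrt (2 - ln s) * sqrt (2 - ln s) = 2 - ln s" using p by simp
    have sp: "sqrt s > 0" "sqrt (2 - ln s) > 0" using s p by auto
    have "((2 * (inverse (sqrt s) / 2)) * sqrt (2 - ln s) - 2 * sqrt s * (inverse (sqrt (2 - ln s)) / 2 * (0 - 1 / (sqrt s * sqrt s)))) / (sqrt (2 - ln s) * sqrt (2 - ln s))
      = 1 / (sqrt s * sqrt (2 - ln s)) + 1 / (sqrt s * (sqrt (2 - ln s) * sqrt (2 - ln s)) * sqrt (2 - ln s))"
      by (rule Hd_alg[OF sp])
    then show ?thesis unfolding Hd_def q r .
  qed
  ultimately show ?thesis unfolding H_def[abs_def] by simp
qed

lemma G_le_Hd: "0 < s \<Longrightarrow> s \<le> 1 \<Longrightarrow> G s \<le> Hd s"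
proof -
  assume s: "0 < s" "s \<le> 1"
  have p: "0 < 2 - ln s" using two_ln_pos[OF s] .
  have "G s = 1 / (sqrt s * sqrt (2 - ln s))" unfolding G_def by (simp add: real_sqrt_mult)
  moreover have "0 \<le> 1 / (sqrt s * (2 - ln s) * sqrt (2 - ln s))" using s p by simp
  ultimately show ?thesis unfolding Hd_def by simp
qed

lemma Hd_nonneg: "0 < s \<Longrightarrow> s \<le> 1 \<Longrightarrow> 0 \<le> Hd s"
  using G_le_Hd G_pos by (meson less_imp_le order.trans)

lemma H_nonneg: "0 < s \<Longrightarrow> s \<le> 1 \<Longrightarrow> 0 \<le> H s"
  unfolding H_def using two_ln_pos[of s] by simp

lemma w_H: "0 < t \<Longrightarrow> t \<le> 1 \<Longrightarrow> phi t / t * H t = 2"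
proof -
  assume t: "0 < t" "t \<le> 1"
  have p: "0 < 2 - ln t" using two_ln_pos[OF t] .
  have "phi t = sqrt t * sqrt (2 - ln t)" unfolding phi_def by (simp add: real_sqrt_mult)
  then have "phi t / t * H t = (sqrt t * sqrt (2 - ln t)) / t * (2 * sqrt t / sqrt (2 - ln t))"
    by (simp add: H_def)
  also have "\<dots> = 2 * (sqrt t * sqrt t) / t" using p by (simp add: field_simps)
  also have "\<dots> = 2" using t by simp
  finally show ?thesis .
qed

lemma w_G: "0 < t \<Longrightarrow> t \<le> 1 \<Longrightarrow> phi t / t * (t * G t) = 1"
  using G_eq[of t] phi_pos[of t] by simp


definition bb :: "nat \<Rightarrow> real" where "bb n = exp (2 - 2 * exp (2 * real n))"
definition cc :: "nat \<Rightarrow> real" where "cc n = exp (2 - 2 * exp (2 * real n + 1))"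
definition xs :: "nat \<Rightarrow> real \<Rightarrow> real" where "xs n t = G t * indicator {bb (Suc n)<..bb n} t"
definition Ga :: "real \<Rightarrow> real \<Rightarrow> real" where "Ga a t = G t * indicator {a<..1} t"

lemma bb_pos: "0 < bb n" unfolding bb_def by simp
lemma cc_pos: "0 < cc n" unfolding cc_def by simp
lemma bb_le1: "bb n \<le> 1"
proof -
  have "1 \<le> exp (2 * real n)" by simp
  then show ?thesis unfolding bb_def by simp
qed
lemma bb_0: "bb 0 = 1" unfolding bb_def by simp
lemma bb_cc: "bb (Suc n) < cc n" "cc n < bb n"
  unfolding bb_def cc_def by (simp_all add: algebra_simps)
lemma bb_mono: "m \<le> n \<Longrightarrow> bb n \<le> bb m"
  unfolding bb_def by simp

lemma F2_bb: "F2 (bb n) = - (ln 2 + 2 * real n)"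
  unfolding F2_def bb_def by (simp add: ln_mult)
lemma F2_cc: "F2 (cc n) = - (ln 2 + (2 * real n + 1))"
  unfolding F2_def cc_def by (simp add: ln_mult)

lemma id_meas[measurable]: "(\<lambda>x::real. x) \<in> borel_measurable I01"
  by (rule measurable_restrict_space1, rule measurable_completion) simp

lemma G_meas[measurable]: "G \<in> borel_measurable I01"
  unfolding G_def[abs_def] by measurable

lemma ind_meas2[measurable]: "(indicator {a<..b} :: real \<Rightarrow> real) \<in> borel_measurable I01"
  unfolding borel_measurable_indicator_iff using sets_I01_borel[of "{a<..b}"] by simp

lemma ind_meas3[measurable]: "(indicator {a..b} :: real \<Rightarrow> real) \<in> borel_measurable I01"
  unfolding borel_measurable_indicator_iff using sets_I01_borel[of "{a..b}"] by simp

lemma xs_meas[measurable]: "xs n \<in> borel_measurable I01"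
  unfolding xs_def[abs_def] by measurable

lemma Ga_meas[measurable]: "Ga a \<in> borel_measurable I01"
  unfolding Ga_def[abs_def] by measurable

lemma int_G2:
  assumes "0 < a" "a \<le> b" "b \<le> 1"
  shows "(\<integral>\<^sup>+s. ennreal ((G s)\<^sup>2) * indicator {a..b} s \<partial>I01) = ennreal (F2 b - F2 a)"
proof -
  have "(\<integral>\<^sup>+s. ennreal ((G s)\<^sup>2) * indicator {a..b} s \<partial>I01) = (\<integral>\<^sup>+s. ennreal (1 / (s * (2 - ln s))) * indicator {a..b} s \<partial>I01)"
    using assms by (intro nn_integral_cong) (auto simp: indicator_def G_sq)
  also have "\<dots> = ennreal (F2 b - F2 a)"
  proof (rule FTC_I01)
    fix s assume s: "s \<in> {a..b}"
    then show "(F2 has_real_derivative 1 / (s * (2 - ln s))) (at s)" using assms by (intro F2_deriv) auto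
    show "0 \<le> 1 / (s * (2 - ln s))" using s assms h_pos[of s] by auto
  qed (use assms in auto)
  finally show ?thesis .
qed

lemma L2e_xs_ge: "1 \<le> L2e (xs n)"
proof -
  have "ennreal 1 = ennreal (F2 (bb n) - F2 (cc n))" by (simp add: F2_bb F2_cc)
  also have "\<dots> = (\<integral>\<^sup>+s. ennreal ((G s)\<^sup>2) * indicator {cc n..bb n} s \<partial>I01)"
    using bb_cc[of n] cc_pos[of n] bb_le1[of n] by (intro int_G2[symmetric]) auto
  also have "\<dots> \<le> L2e (xs n)"
    unfolding L2e_def xs_def
    using bb_cc[of n] by (intro nn_integral_mono) (auto simp: indicator_def)
  finally show ?thesis by simp
qed

lemma L2e_xs_le: "L2e (xs n) \<le> 2"
proof -
  have "L2e (xs n) \<le> (\<integral>\<^sup>+s. ennreal ((G s)\<^sup>2) * indicator {bb (Suc n)..bb n} s \<partial>I01)"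
    unfolding L2e_def xs_def by (intro nn_integral_mono) (auto simp: indicator_def)
  also have "\<dots> = ennreal (F2 (bb n) - F2 (bb (Suc n)))"
    using bb_cc[of n] bb_pos[of "Suc n"] bb_le1[of n] by (intro int_G2) auto
  also have "F2 (bb n) - F2 (bb (Suc n)) = 2" by (simp add: F2_bb)
  finally show ?thesis by simp
qed

lemma xs_EF: "xs n \<in> EF"
proof -
  have "L2e (xs n) < \<infinity>" using L2e_xs_le[of n] by (rule le_less_trans) simp
  then show ?thesis unfolding EF_def by simp
qed

lemma NF_xs: "1 \<le> nrmF (xs n)"
proof -
  have "ennreal 1 \<le> ennreal ((nrmF (xs n))\<^sup>2)" using L2e_xs_ge[of n] L2e_eq[OF xs_EF] by simp
  then have "1 \<le> (nrmF (xs n))\<^sup>2" by (simp add: ennreal_le_iff2)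
  then show ?thesis using power2_le_iff_abs_le[of "nrmF (xs n)" 1] NF_nonneg[of "xs n"] by simp
qed

lemma Pe_Ga:
  assumes a: "0 < a" "a \<le> 1" and t: "0 < t" "t \<le> 1"
  shows "Pe (G t) (Ga a) \<le> ennreal (H t)"
proof -
  have Gt: "0 < G t" using G_pos t by simp
  have pw: "ennreal (\<bar>Ga a s\<bar> - G t) \<le> ennreal (Hd s) * indicator {a..t} s" for s
  proof (cases "s \<in> {a<..1}")
    case True
    then have s: "0 < s" "s \<le> 1" "a < s" using a by auto
    show ?thesis
    proof (cases "s \<le> t")
      case True
      have "\<bar>Ga a s\<bar> - G t \<le> Hd s"
        using G_le_Hd[OF s(1,2)] G_pos[OF s(1,2)] Gt \<open>s \<in> {a<..1}\<close> by (simp add: Ga_def)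
      then show ?thesis using True s by (auto simp: indicator_def intro!: ennreal_leI)
    next
      case False
      have "G s \<le> G t" using False t s by (intro G_anti) auto
      then have "\<bar>Ga a s\<bar> - G t \<le> 0" using G_pos[OF s(1,2)] \<open>s \<in> {a<..1}\<close> by (simp add: Ga_def)
      then show ?thesis by (simp add: ennreal_neg)
    qed
  next
    case False
    then have "\<bar>Ga a s\<bar> - G t \<le> 0" using Gt by (simp add: Ga_def)
    then show ?thesis by (simp add: ennreal_neg)
  qed
  have "Pe (G t) (Ga a) \<le> (\<integral>\<^sup>+s. ennreal (Hd s) * indicator {a..t} s \<partial>I01)"
    unfolding Pe_def by (intro nn_integral_mono pw)
  also have "\<dots> \<le> ennreal (H t)"
  proof (cases "a \<le> t")
    case True
    have "(\<integral>\<^sup>+s. ennreal (Hd s) * indicator {a..t} s \<partial>I01) = ennreal (H t - H a)"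
    proof (rule FTC_I01)
      fix s assume s: "s \<in> {a..t}"
      then show "(H has_real_derivative Hd s) (at s)" using a t by (intro H_deriv) auto
      show "0 \<le> Hd s" using s a t by (intro Hd_nonneg) auto
    qed (use a t True in auto)
    also have "\<dots> \<le> ennreal (H t)" using H_nonneg[OF a] by (intro ennreal_leI) simp
    finally show ?thesis .
  next
    case False
    then have "{a..t} = {}" by simp
    then show ?thesis by simp
  qed
  finally show ?thesis .
qed

lemma NMe_Ga: assumes "0 < a" "a \<le> 1" shows "NMe (Ga a) \<le> 3"
  unfolding NMe_def
proof (rule SUP_least)
  fix t :: real assume t: "t \<in> {0<..1}"
  have Gt: "0 < G t" using G_pos t by simp
  have tGH: "0 \<le> H t" "0 \<le> t * G t" using H_nonneg t Gt by auto
  have "Qe t (Ga a) \<le> ennreal (t * G t) + Pe (G t) (Ga a)" using Gt by (intro Qe_le) simp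
  also have "\<dots> \<le> ennreal (t * G t) + ennreal (H t)" using Pe_Ga[OF assms] t by (intro add_left_mono) auto
  also have "\<dots> = ennreal (t * G t + H t)"
    using tGH by (intro ennreal_plus[symmetric])
  finally have "ennreal (phi t / t) * Qe t (Ga a) \<le> ennreal (phi t / t) * ennreal (t * G t + H t)"
    by (rule mult_left_mono) simp
  also have "\<dots> = ennreal (phi t / t * (t * G t + H t))"
    using t phi_pos[of t] tGH by (intro ennreal_mult[symmetric]) auto
  also have "phi t / t * (t * G t + H t) = 3"
    using w_H[of t] w_G[of t] t by (simp add: distrib_left)
  finally show "ennreal (phi t / t) * Qe t (Ga a) \<le> 3" by simp
qed

lemma xs_le_Ga: "\<bar>xs n t\<bar> \<le> \<bar>Ga (bb (Suc n)) t\<bar>"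
  using bb_le1[of n] unfolding xs_def Ga_def by (auto simp: indicator_def)

lemma xs_EE: "xs n \<in> EE"
proof -
  have "NMe (xs n) \<le> NMe (Ga (bb (Suc n)))" by (intro NMe_mono) (simp add: xs_le_Ga)
  also have "\<dots> \<le> 3" using bb_pos bb_le1 by (intro NMe_Ga) auto
  finally have "NMe (xs n) < \<infinity>" by (rule le_less_trans) simp
  then show ?thesis using xs_EF by (simp add: EE_def)
qed


lemma in_G_cong:
  assumes eq: "\<And>t. t \<in> {0<..1} \<Longrightarrow> f t = g t" and g: "in_G g"
  shows "in_G f"
  unfolding in_G_def
proof (intro conjI ballI)
  fix t :: real assume "t \<in> {0<..1}" then show "f t > 0" using g eq by (auto simp: in_G_def)
next
  show "mono_on {0<..1} f" using g eq unfolding in_G_def mono_on_def by auto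
next
  have cg: "concave_on {0<..1} g" using g by (simp add: in_G_def)
  have cvx: "convex ({0<..1}::real set)" by (rule convex_real_interval)
  show "concave_on {0<..1} f"
    unfolding concave_on_iff
  proof (intro conjI ballI allI impI)
    show "convex ({0<..1}::real set)" by (rule cvx)
    fix x y u v :: real assume xy: "x \<in> {0<..1}" "y \<in> {0<..1}" and uv: "u \<ge> 0" "v \<ge> 0" "u + v = 1"
    have m: "u *\<^sub>R x + v *\<^sub>R y \<in> {0<..1}" using cvx xy uv unfolding convex_def by blast
    have "u * g x + v * g y \<le> g (u *\<^sub>R x + v *\<^sub>R y)"
      using cg xy uv unfolding concave_on_iff by blast
    then show "u * f x + v * f y \<le> f (u *\<^sub>R x + v *\<^sub>R y)" using eq xy m by simp
  qed
qed

lemma concave_sqrt_comp: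
  fixes h :: "real \<Rightarrow> real"
  assumes c: "concave_on S h" and nn: "\<And>x. x \<in> S \<Longrightarrow> 0 \<le> h x"
  shows "concave_on S (\<lambda>x. sqrt (h x))"
  unfolding concave_on_iff
proof (intro conjI ballI allI impI)
  show "convex S" using c by (rule concave_on_imp_convex)
  fix x y u v :: real assume xy: "x \<in> S" "y \<in> S" and uv: "u \<ge> 0" "v \<ge> 0" "u + v = 1"
  have m: "u *\<^sub>R x + v *\<^sub>R y \<in> S" using concave_on_imp_convex[OF c] xy uv unfolding convex_def by blast
  define a where "a = sqrt (h x)"
  define b where "b = sqrt (h y)"
  have ab: "a \<ge> 0" "b \<ge> 0" "a\<^sup>2 = h x" "b\<^sup>2 = h y" using nn xy by (auto simp: a_def b_def)
  have "(u * a + v * b)\<^sup>2 \<le> u * a\<^sup>2 + v * b\<^sup>2"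
  proof -
    have v: "v = 1 - u" using uv(3) by simp
    have "u * a\<^sup>2 + v * b\<^sup>2 - (u * a + v * b)\<^sup>2 = u * v * (a - b)\<^sup>2"
      unfolding v by (simp add: power2_eq_square algebra_simps)
    also have "\<dots> \<ge> 0" using uv by simp
    finally show ?thesis by simp
  qed
  also have "\<dots> = u * h x + v * h y" using ab by simp
  also have "\<dots> \<le> h (u *\<^sub>R x + v *\<^sub>R y)" using c xy uv unfolding concave_on_iff by blast
  finally have "u * a + v * b \<le> sqrt (h (u *\<^sub>R x + v *\<^sub>R y))" by (rule real_le_rsqrt)
  then show "u * sqrt (h x) + v * sqrt (h y) \<le> sqrt (h (u *\<^sub>R x + v *\<^sub>R y))" by (simp add: a_def b_def)
qed

lemma concave_h: "concave_on {0<..1} (\<lambda>t::real. t * (2 - ln t))"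
proof (rule f''_le0_imp_concave)
  show "convex ({0<..1}::real set)" by (rule convex_real_interval)
  fix x :: real assume x: "x \<in> {0<..1}"
  show "((\<lambda>t. t * (2 - ln t)) has_real_derivative 1 - ln x) (at x)"
  proof -
    have "((\<lambda>t. t * (2 - ln t)) has_real_derivative 1 * (2 - ln x) + x * (0 - 1 / x)) (at x)"
      using x by (intro derivative_eq_intros) auto
    then show ?thesis using x by simp
  qed
  show "((\<lambda>t. 1 - ln t) has_real_derivative - 1 / x) (at x)"
  proof -
    have "((\<lambda>t. 1 - ln t) has_real_derivative 0 - 1 / x) (at x)"
      using x by (intro derivative_eq_intros) auto
    then show ?thesis by simp
  qed
  show "- 1 / x \<le> 0" using x by simp
qed

lemma in_G_sqrt: "in_G sqrt"
  unfolding in_G_def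
proof (intro conjI ballI)
  show "mono_on {0<..1} sqrt" by (auto simp: mono_on_def)
  have "concave_on {0<..1} (\<lambda>x::real. sqrt x)"
    by (rule concave_sqrt_comp[where h="\<lambda>x. x"]) (auto simp: concave_on_ident convex_real_interval)
  then show "concave_on {0<..1} sqrt" by simp
qed simp

lemma in_G_E: "in_G (\<lambda>t. sqrt t + phi t)"
  unfolding in_G_def
proof (intro conjI ballI)
  fix t :: real assume "t \<in> {0<..1}"
  then have "0 < sqrt t" "0 < phi t" using phi_pos[of t] by auto
  then show "0 < sqrt t + phi t" by (rule add_pos_pos)
next
  show "mono_on {0<..1} (\<lambda>t. sqrt t + phi t)"
    unfolding mono_on_def using phi_mono by (auto intro!: add_mono)
next
  have "concave_on {0<..1} phi"
    unfolding phi_def[abs_def] by (rule concave_sqrt_comp[OF concave_h]) (auto intro: less_imp_le h_pos)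
  moreover have "concave_on {0<..1} (\<lambda>x::real. sqrt x)"
    by (rule concave_sqrt_comp[where h="\<lambda>x. x"]) (auto simp: concave_on_ident convex_real_interval)
  ultimately show "concave_on {0<..1} (\<lambda>t. sqrt t + phi t)" by (rule concave_on_add[rotated])
qed

lemma fund_F: "t \<in> {0<..1} \<Longrightarrow> fund_fun nrmF t = sqrt t"
  unfolding fund_fun_def by (rule NF_ind) auto

lemma fund_E: "t \<in> {0<..1} \<Longrightarrow> fund_fun nrmE t = sqrt t + phi t"
  unfolding fund_fun_def nrmE_def using NF_ind[of t] NMe_ind[of t] phi_pos[of t] by auto

lemma ratio_lim: "((\<lambda>t. fund_fun nrmF t / fund_fun nrmE t) \<longlongrightarrow> 0) (at_right 0)"
proof -
  have lim: "((\<lambda>t::real. sqrt t / (sqrt t + sqrt (t * (2 - ln t)))) \<longlongrightarrow> 0) (at_right 0)"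
    by real_asymp
  have "eventually (\<lambda>t. sqrt t / (sqrt t + sqrt (t * (2 - ln t))) = fund_fun nrmF t / fund_fun nrmE t) (at_right 0)"
    unfolding eventually_at_right_field
    by (intro exI[of _ 1]) (auto simp: fund_F fund_E phi_def)
  then show ?thesis using lim by (rule Lim_transform_eventually[rotated])
qed


lemma xs_disj: assumes "i \<noteq> j" "xs i t \<noteq> 0" shows "xs j t = 0"
proof (rule ccontr)
  assume "xs j t \<noteq> 0"
  then have j: "bb (Suc j) < t" "t \<le> bb j" by (auto simp: xs_def indicator_def split: if_splits)
  have i: "bb (Suc i) < t" "t \<le> bb i" using assms(2) by (auto simp: xs_def indicator_def split: if_splits)
  show False
  proof (cases "i < j")
    case True
    then have "bb j \<le> bb (Suc i)" by (intro bb_mono) simp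
    then show False using i j by simp
  next
    case False
    then have "j < i" using assms(1) by simp
    then have "bb i \<le> bb (Suc j)" by (intro bb_mono) simp
    then show False using i j by simp
  qed
qed

lemma zero_EE: "(\<lambda>t. 0) \<in> EE"
proof -
  have "NMe (\<lambda>t. 0) = 0" by (rule NMe_AE0) simp
  then show ?thesis by (simp add: EE_def EF_def L2e_def)
qed

lemma lin_EE: "(\<lambda>t. \<Sum>i<N. c i * xs i t) \<in> EE"
proof (induction N)
  case 0 then show ?case using zero_EE by simp
next
  case (Suc N)
  have "(\<lambda>t. (\<Sum>i<N. c i * xs i t) + c N * xs N t) \<in> EE"
    using EE_add[OF Suc.IH EE_cmult[OF xs_EE, THEN conjunct1]] by blast
  then show ?case by simp
qed

lemma sum_single: "j < N \<Longrightarrow> xs j t \<noteq> 0 \<Longrightarrow> (\<Sum>i<N. c i * xs i t) = c j * xs j t"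
proof -
  assume j: "j < N" "xs j t \<noteq> 0"
  have "(\<Sum>i<N. c i * xs i t) = c j * xs j t + (\<Sum>i\<in>{..<N} - {j}. c i * xs i t)"
    using j by (subst sum.remove[of _ j]) auto
  also have "(\<Sum>i\<in>{..<N} - {j}. c i * xs i t) = 0"
    using j xs_disj[of j _ t] by (intro sum.neutral) auto
  finally show ?thesis by simp
qed

lemma span_bound: "nrmE (\<lambda>t. \<Sum>i<N. c i * xs i t) \<le> 4 * nrmF (\<lambda>t. \<Sum>i<N. c i * xs i t)"
proof -
  define y where "y = (\<lambda>t. \<Sum>i<N. c i * xs i t)"
  have yE: "y \<in> EE" unfolding y_def by (rule lin_EE)
  have [measurable]: "y \<in> borel_measurable I01" using EE_meas[OF yE] .
  define m where "m = Max (insert 0 ((\<lambda>i. \<bar>c i\<bar>) ` {..<N}))"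
  have m_ge: "\<bar>c i\<bar> \<le> m" if "i < N" for i unfolding m_def using that by (intro Max_ge) auto
  have m_nn: "0 \<le> m" unfolding m_def by (intro Max_ge) auto
  have m_in: "m \<in> insert 0 ((\<lambda>i. \<bar>c i\<bar>) ` {..<N})" unfolding m_def by (intro Max_in) auto
  have low: "\<bar>c j\<bar> \<le> nrmF y" if j: "j < N" for j
  proof -
    have pw: "\<bar>c j * xs j t\<bar> \<le> \<bar>y t\<bar>" for t
    proof (cases "xs j t = 0")
      case False
      then show ?thesis unfolding y_def using sum_single[OF j False] by simp
    qed simp
    have "nrmF (\<lambda>t. c j * xs j t) \<le> nrmF y"
      using EF_ideal[OF EE_EF[OF yE], of "\<lambda>t. c j * xs j t"] pw by simp
    moreover have "nrmF (\<lambda>t. c j * xs j t) = \<bar>c j\<bar> * nrmF (xs j)" using EF_cmult[OF xs_EF] by blast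
    moreover have "\<bar>c j\<bar> \<le> \<bar>c j\<bar> * nrmF (xs j)" using NF_xs[of j] by (simp add: mult_le_cancel_left1)
    ultimately show ?thesis by linarith
  qed
  have mNF: "m \<le> nrmF y" using m_in low NF_nonneg[of y] by auto
  have up: "\<bar>y t\<bar> \<le> \<bar>m * Ga (bb N) t\<bar>" for t
  proof (cases "\<exists>j<N. xs j t \<noteq> 0")
    case True
    then obtain j where j: "j < N" "xs j t \<noteq> 0" by blast
    have "\<bar>y t\<bar> = \<bar>c j\<bar> * \<bar>xs j t\<bar>" unfolding y_def using sum_single[OF j] by (simp add: abs_mult)
    also have "\<dots> \<le> m * \<bar>xs j t\<bar>" using m_ge[OF j(1)] by (intro mult_right_mono) auto
    also have "\<bar>xs j t\<bar> \<le> \<bar>Ga (bb (Suc j)) t\<bar>" by (rule xs_le_Ga)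
    also have "\<bar>Ga (bb (Suc j)) t\<bar> \<le> \<bar>Ga (bb N) t\<bar>"
    proof -
      have "bb N \<le> bb (Suc j)" using j by (intro bb_mono) simp
      then show ?thesis unfolding Ga_def by (auto simp: indicator_def abs_mult)
    qed
    finally show ?thesis using m_nn by (simp add: abs_mult mult_left_mono)
  next
    case False
    then have "y t = 0" unfolding y_def by (intro sum.neutral) auto
    then show ?thesis by simp
  qed
  have "NMe y \<le> NMe (\<lambda>t. m * Ga (bb N) t)" by (intro NMe_mono) (simp add: up)
  also have "\<dots> = ennreal m * NMe (Ga (bb N))" using m_nn by (subst NMe_cmult) auto
  also have "\<dots> \<le> ennreal m * 3" using bb_pos bb_le1 by (intro mult_left_mono NMe_Ga) auto
  also have "\<dots> = ennreal (3 * m)" using m_nn by (simp add: ennreal_mult' mult.commute)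
  finally have "enn2real (NMe y) \<le> 3 * m" using m_nn by (intro enn2real_leI) auto
  then have "nrmE y \<le> 4 * nrmF y" using mNF unfolding nrmE_def by linarith
  then show ?thesis by (simp add: y_def)
qed

lemma closure_bound:
  assumes z: "z \<in> closed_lin_span EE nrmE xs"
  shows "nrmE z \<le> 4 * nrmF z"
proof (rule field_le_epsilon)
  fix e :: real assume e: "0 < e"
  have zE: "z \<in> EE" using z by (simp add: closed_lin_span_def)
  have e5: "e / 5 > 0" using e by simp
  have "\<forall>e>0. \<exists>y\<in>lin_span xs. nrmE (\<lambda>t. z t - y t) < e" using z by (simp add: closed_lin_span_def)
  then obtain y where yl: "y \<in> lin_span xs" and yd: "nrmE (\<lambda>t. z t - y t) < e / 5"
    using e5 by blast
  obtain N c where yeq: "y = (\<lambda>t. \<Sum>i<N. c i * xs i t)" using yl unfolding lin_span_def by blast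
  have yE: "y \<in> EE" unfolding yeq by (rule lin_EE)
  have dE: "(\<lambda>t. z t - y t) \<in> EE" by (rule EE_diff[OF zE yE])
  have "nrmE z = nrmE (\<lambda>t. y t + (z t - y t))" by simp
  also have "\<dots> \<le> nrmE y + nrmE (\<lambda>t. z t - y t)" using EE_add[OF yE dE] by blast
  also have "nrmE y \<le> 4 * nrmF y" unfolding yeq by (rule span_bound)
  also have "nrmF y \<le> nrmF z + nrmF (\<lambda>t. y t - z t)"
  proof -
    have "nrmF (\<lambda>t. z t + (y t - z t)) \<le> nrmF z + nrmF (\<lambda>t. y t - z t)"
      using EF_add[OF EE_EF[OF zE] EE_EF[OF EE_diff[OF yE zE]]] by blast
    then show ?thesis by simp
  qed
  also have "nrmF (\<lambda>t. y t - z t) \<le> nrmE (\<lambda>t. z t - y t)" using NF_sym NE_ge_NF by metis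
  finally have "nrmE z \<le> 4 * nrmF z + 5 * nrmE (\<lambda>t. z t - y t)" by simp
  also have "5 * nrmE (\<lambda>t. z t - y t) \<le> e" using yd by simp
  finally show "nrmE z \<le> 4 * nrmF z + e" by simp
qed

lemma main_result:
  "symmetric_space EE nrmE \<and> symmetric_space EF nrmF \<and>
     in_G (fund_fun nrmE) \<and> in_G (fund_fun nrmF) \<and>
     EE \<subseteq> EF \<and>
     ((\<lambda>t. fund_fun nrmF t / fund_fun nrmE t) \<longlongrightarrow> 0) (at_right 0) \<and>
     (\<exists>C. \<forall>x\<in>EE. nrmF x \<le> C * nrmE x) \<and>
     \<not> DSS EE nrmE nrmF (\<lambda>x. x)"
proof (intro conjI)
  show "symmetric_space EE nrmE" by (rule symmetric_EE)
  show "symmetric_space EF nrmF" by (rule symmetric_EF)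
  show "in_G (fund_fun nrmE)" by (rule in_G_cong[OF fund_E in_G_E])
  show "in_G (fund_fun nrmF)" by (rule in_G_cong[OF fund_F in_G_sqrt])
  show "EE \<subseteq> EF" by (auto simp: EE_def)
  show "((\<lambda>t. fund_fun nrmF t / fund_fun nrmE t) \<longlongrightarrow> 0) (at_right 0)" by (rule ratio_lim)
  show "\<exists>C. \<forall>x\<in>EE. nrmF x \<le> C * nrmE x" by (intro exI[of _ 1]) (simp add: NE_ge_NF)
  show "\<not> DSS EE nrmE nrmF (\<lambda>x. x)"
    unfolding DSS_def not_not
  proof (intro exI[of _ xs] conjI allI impI)
    fix n
    show "xs n \<in> EE" by (rule xs_EE)
    show "nrmE (xs n) \<noteq> 0" using NF_xs[of n] NE_ge_NF[of "xs n"] by linarith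
  next
    fix i j :: nat assume "i \<noteq> j"
    then show "AE t in I01. xs i t * xs j t = 0"
      using xs_disj[of i j] by (intro AE_I2) auto
  next
    show "\<exists>c>0. \<exists>C>0. \<forall>z\<in>closed_lin_span EE nrmE xs. c * nrmE z \<le> nrmF z \<and> nrmF z \<le> C * nrmE z"
    proof -
      have b: "\<forall>z\<in>closed_lin_span EE nrmE xs. 1/4 * nrmE z \<le> nrmF z \<and> nrmF z \<le> 1 * nrmE z"
      proof
        fix z assume z: "z \<in> closed_lin_span EE nrmE xs"
        show "1/4 * nrmE z \<le> nrmF z \<and> nrmF z \<le> 1 * nrmE z" using closure_bound[OF z] NE_ge_NF[of z] by simp
      qed
      show ?thesis using b by (intro exI[of _ "1/4::real"] exI[of _ "1::real"] conjI) simp_all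
    qed
  qed
qed


theorem theorem3:
  shows "\<exists>E NE F NF.
     symmetric_space E NE \<and> symmetric_space F NF \<and>
     in_G (fund_fun NE) \<and> in_G (fund_fun NF) \<and>
     E \<subseteq> F \<and>
     ((\<lambda>t. fund_fun NF t / fund_fun NE t) \<longlongrightarrow> 0) (at_right 0) \<and>
     (\<exists>C. \<forall>x\<in>E. NF x \<le> C * NE x) \<and>
     \<not> DSS E NE NF (\<lambda>x. x)"
  by (rule exI[of _ EE], rule exI[of _ nrmE], rule exI[of _ EF], rule exI[of _ nrmF], rule main_result)

end
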